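(* Let $G$ be a graph with finitely many vertices. Let $\alpha=\alpha_1\alpha_2\cdots\alpha_n$ be a path in $G$ such that there are infinitely many edges from $s(\alpha_1)$ to $r(\alpha_1)$. Let $E$ be the graph with: - vertex set $G^0$; - edge set $G^1\cup\{\alpha^m: m\in\mathbb N\}$, consisting of $G^1$ together with countably infinitely many new edges; - range and source maps extending those of $G$, with $r_E(\alpha^m)=r_G(\alpha)$ and $s_E(\alpha^m)=s_G(\alpha)$. Then $G\sim_M E$.
   Context: A graph $G=(G^0,G^1,r,s)$ has vertex set $G^0$, edge set $G^1$, and range/source maps; multiple (even infinitely many) edges and loops are allowed. A path is a sequence of edges $e_1\cdots e_n$ with $r(e_i)=s(e_{i+1})$; it has $s(e_1\cdots e_n)=s(e_1)$ and $r(e_1\cdots e_n)=r(e_n)$. A source receives no edges, a sink emits no edges, and an infinite emitter emits infinitely many edges. A vertex is singular if it is a sink or infinite emitter, and regular otherwise. Move-equivalence $\sim_M$ is the smallest equivalence relation on graphs with finitely many vertices such that $G\sim_M E$ whenever $E$ is isomorphic to a graph obtained from $G$ by one of the following moves. (S) Delete a regular source together with the edges it emits. (R) For a regular vertex $u$ emitting exactly one edge $f$, with $r(f)\neq u$, and all of whose incoming edges have the same source $v$: delete $u$, $f$ and the edges into $u$, and add for each $e\in r^{-1}(u)$ an edge $[ef]$ from $v$ to $r(f)$. (O) Out-splitting at a non-sink $v$ along a partition $\mathcal E_1,\dots,\mathcal E_n$ of $s^{-1}(v)$ with at most one infinite part. Replace $v$ by $v^1,\dots,v^n$. Each edge $e$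 into $v$ becomes copies $e^1,\dots,e^n$ with $r(e^i)=v^i$ and source $s(e)$, or source $v^j$ if $s(e)=v$ and $e\in\mathcal E_j$. An edge from $v$ to $w\neq v$ lying in $\mathcal E_i$ gets source $v^i$. (I) In-splitting at a regular non-source $v$ along a partition $\mathcal E_1,\dots,\mathcal E_n$ of $r^{-1}(v)$. Replace $v$ by $v^1,\dots,v^n$. Each edge $e$ out of $v$ becomes copies $e^1,\dots,e^n$ with $s(e^i)=v^i$ and range $r(e)$, or range $v^j$ if $r(e)=v$ and $e\in\mathcal E_j$. An edge into $v$ from $w\neq v$ lying in $\mathcal E_i$ gets range $v^i$. *)

theory Defs
  imports Main
begin

record ('v, 'e) graph =
  verts :: "'v set"
  edges :: "'e set"
  src   :: "'e \<Rightarrow> 'v"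
  rng   :: "'e \<Rightarrow> 'v"

definition wf_graph :: "('v, 'e) graph \<Rightarrow> bool" where
  "wf_graph G \<longleftrightarrow> (\<forall>e\<in>edges G. src G e \<in> verts G \<and> rng G e \<in> verts G)"

definition out_edges :: "('v, 'e) graph \<Rightarrow> 'v \<Rightarrow> 'e set" where
  "out_edges G v = {e \<in> edges G. src G e = v}"

definition in_edges :: "('v, 'e) graph \<Rightarrow> 'v \<Rightarrow> 'e set" where
  "in_edges G v = {e \<in> edges G. rng G e = v}"

definition is_source :: "('v, 'e) graph \<Rightarrow> 'v \<Rightarrow> bool" where
  "is_source G v \<longleftrightarrow> in_edges G v = {}"

definition is_sink :: "('v, 'e) graph \<Rightarrow> 'v \<Rightarrow> bool" where
  "is_sink G v \<longleftrightarrow> out_edges G v = {}"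

definition is_regular :: "('v, 'e) graph \<Rightarrow> 'v \<Rightarrow> bool" where
  "is_regular G v \<longleftrightarrow> out_edges G v \<noteq> {} \<and> finite (out_edges G v)"

definition is_path :: "('v, 'e) graph \<Rightarrow> 'e list \<Rightarrow> bool" where
  "is_path G p \<longleftrightarrow> p \<noteq> [] \<and> set p \<subseteq> edges G \<and>
     (\<forall>i. Suc i < length p \<longrightarrow> rng G (p ! i) = src G (p ! Suc i))"

definition graph_iso :: "('v, 'e) graph \<Rightarrow> ('w, 'f) graph \<Rightarrow> bool" where
  "graph_iso G H \<longleftrightarrow> (\<exists>\<phi> \<psi>. bij_betw \<phi> (verts G) (verts H) \<and> bij_betw \<psi> (edges G) (edges H) \<and>
     (\<forall>e\<in>edges G. src H (\<psi> e) = \<phi> (src G e) \<and> rng H (\<psi> e) = \<phi> (rng G e)))"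

definition move_S :: "('v, 'e) graph \<Rightarrow> 'v \<Rightarrow> ('v, 'e) graph" where
  "move_S G u = \<lparr>verts = verts G - {u}, edges = edges G - out_edges G u,
                 src = src G, rng = rng G\<rparr>"

definition move_S_ok :: "('v, 'e) graph \<Rightarrow> 'v \<Rightarrow> bool" where
  "move_S_ok G u \<longleftrightarrow> u \<in> verts G \<and> is_regular G u \<and> is_source G u"

text \<open>(R) reduction at u emitting exactly the edge f; the new edge [ef] is encoded as Inr e.\<close>
definition move_R :: "('v, 'e) graph \<Rightarrow> 'v \<Rightarrow> 'e \<Rightarrow> 'v \<Rightarrow> ('v, 'e + 'e) graph" where
  "move_R G u f v = \<lparr>verts = verts G - {u},
     edges = Inl ` (edges G - {f} - in_edges G u) \<union> Inr ` in_edges G u,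
     src = (\<lambda>x. case x of Inl e \<Rightarrow> src G e | Inr e \<Rightarrow> v),
     rng = (\<lambda>x. case x of Inl e \<Rightarrow> rng G e | Inr e \<Rightarrow> rng G f)\<rparr>"

definition move_R_ok :: "('v, 'e) graph \<Rightarrow> 'v \<Rightarrow> 'e \<Rightarrow> 'v \<Rightarrow> bool" where
  "move_R_ok G u f v \<longleftrightarrow> u \<in> verts G \<and> v \<in> verts G \<and> is_regular G u \<and>
     out_edges G u = {f} \<and> rng G f \<noteq> u \<and> (\<forall>e\<in>in_edges G u. src G e = v)"

definition is_partition :: "'e set \<Rightarrow> nat \<Rightarrow> ('e \<Rightarrow> nat) \<Rightarrow> bool" where
  "is_partition A n p \<longleftrightarrow> n \<ge> 1 \<and> (\<forall>e\<in>A. p e \<in> {1..n}) \<and>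
     (\<forall>i\<in>{1..n}. {e\<in>A. p e = i} \<noteq> {})"

text \<open>(O) out-splitting at v; vertex w \<noteq> v is encoded (w,0), v^i as (v,i);
  edge copies e^i as (e,i), unsplit edges as (e,0).\<close>
definition move_O :: "('v, 'e) graph \<Rightarrow> 'v \<Rightarrow> nat \<Rightarrow> ('e \<Rightarrow> nat) \<Rightarrow> ('v \<times> nat, 'e \<times> nat) graph" where
  "move_O G v n p = \<lparr>verts = {(w, 0) | w. w \<in> verts G \<and> w \<noteq> v} \<union> {(v, i) | i. i \<in> {1..n}},
     edges = {(e, 0) | e. e \<in> edges G \<and> rng G e \<noteq> v} \<union>
             {(e, i) | e i. e \<in> edges G \<and> rng G e = v \<and> i \<in> {1..n}},
     src = (\<lambda>(e, i). if src G e = v then (v, p e) else (src G e, 0)),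
     rng = (\<lambda>(e, i). if rng G e = v then (v, i) else (rng G e, 0))\<rparr>"

definition move_O_ok :: "('v, 'e) graph \<Rightarrow> 'v \<Rightarrow> nat \<Rightarrow> ('e \<Rightarrow> nat) \<Rightarrow> bool" where
  "move_O_ok G v n p \<longleftrightarrow> v \<in> verts G \<and> \<not> is_sink G v \<and> is_partition (out_edges G v) n p \<and>
     card {i \<in> {1..n}. infinite {e \<in> out_edges G v. p e = i}} \<le> 1"

text \<open>(I) in-splitting at v, same encoding.\<close>
definition move_I :: "('v, 'e) graph \<Rightarrow> 'v \<Rightarrow> nat \<Rightarrow> ('e \<Rightarrow> nat) \<Rightarrow> ('v \<times> nat, 'e \<times> nat) graph" where
  "move_I G v n p = \<lparr>verts = {(w, 0) | w. w \<in> verts G \<and> w \<noteq> v} \<union> {(v, i) | i. i \<in> {1..n}},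
     edges = {(e, 0) | e. e \<in> edges G \<and> src G e \<noteq> v} \<union>
             {(e, i) | e i. e \<in> edges G \<and> src G e = v \<and> i \<in> {1..n}},
     src = (\<lambda>(e, i). if src G e = v then (v, i) else (src G e, 0)),
     rng = (\<lambda>(e, i). if rng G e = v then (v, p e) else (rng G e, 0))\<rparr>"

definition move_I_ok :: "('v, 'e) graph \<Rightarrow> 'v \<Rightarrow> nat \<Rightarrow> ('e \<Rightarrow> nat) \<Rightarrow> bool" where
  "move_I_ok G v n p \<longleftrightarrow> v \<in> verts G \<and> is_regular G v \<and> \<not> is_source G v \<and>
     is_partition (in_edges G v) n p"

definition move_step :: "('v, 'e) graph \<Rightarrow> ('w, 'f) graph \<Rightarrow> bool" where
  "move_step G H \<longleftrightarrow> wf_graph G \<and> wf_graph H \<and> finite (verts G) \<and> finite (verts H) \<and>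
     ((\<exists>u. move_S_ok G u \<and> graph_iso (move_S G u) H) \<or>
      (\<exists>u f v. move_R_ok G u f v \<and> graph_iso (move_R G u f v) H) \<or>
      (\<exists>v n p. move_O_ok G v n p \<and> graph_iso (move_O G v n p) H) \<or>
      (\<exists>v n p. move_I_ok G v n p \<and> graph_iso (move_I G v n p) H))"

text \<open>Since HOL cannot quantify over all graphs of all types, the
  equivalence closure is taken inside the universe of graphs with vertices in nat and
  edges in 'e + 'f + nat, into which both graphs embed up to isomorphism; every graph
  reachable by moves from a graph with edge set of cardinality \<kappa> has edge set of
  cardinality at most max \<kappa> \<aleph>_0, so this universe is large enough.\<close>
definition move_equiv :: "('v, 'e) graph \<Rightarrow> ('w, 'f) graph \<Rightarrow> bool" where
  "move_equiv G E \<longleftrightarrow> wf_graph G \<and> wf_graph E \<and> finite (verts G) \<and> finite (verts E) \<and>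
     (\<exists>(G' :: (nat, 'e + 'f + nat) graph) (E' :: (nat, 'e + 'f + nat) graph).
        graph_iso G G' \<and> graph_iso E E' \<and> equivclp move_step G' E')"

text \<open>The graph E of the theorem: add countably many new edges Inr m parallel to the path.\<close>
definition add_path_edges :: "('v, 'e) graph \<Rightarrow> 'e list \<Rightarrow> ('v, 'e + nat) graph" where
  "add_path_edges G \<alpha> = \<lparr>verts = verts G, edges = Inl ` edges G \<union> range Inr,
     src = (\<lambda>x. case x of Inl e \<Rightarrow> src G e | Inr m \<Rightarrow> src G (hd \<alpha>)),
     rng = (\<lambda>x. case x of Inl e \<Rightarrow> rng G e | Inr m \<Rightarrow> rng G (last \<alpha>))\<rparr>"

end

theory Submission
  imports Defs
begin

unbundle cardinal_syntax

definition iso_via :: "('v,'e) graph \<Rightarrow> ('w,'f) graph \<Rightarrow> ('v\<Rightarrow>'w) \<Rightarrow> ('e\<Rightarrow>'f) \<Rightarrow> bool" where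
 "iso_via G H \<phi> \<psi> \<longleftrightarrow> bij_betw \<phi> (verts G) (verts H) \<and> bij_betw \<psi> (edges G) (edges H) \<and>
    (\<forall>e\<in>edges G. src H (\<psi> e) = \<phi> (src G e) \<and> rng H (\<psi> e) = \<phi> (rng G e))"

lemma graph_iso_iff: "graph_iso G H \<longleftrightarrow> (\<exists>\<phi> \<psi>. iso_via G H \<phi> \<psi>)"
  unfolding graph_iso_def iso_via_def by blast

lemma iso_via_graph_iso: "iso_via G H \<phi> \<psi> \<Longrightarrow> graph_iso G H"
  unfolding graph_iso_iff by blast

lemma iso_via_inv:
  assumes "wf_graph G" "iso_via G H \<phi> \<psi>"
  shows "iso_via H G (inv_into (verts G) \<phi>) (inv_into (edges G) \<psi>)"
proof -
  have b1: "bij_betw \<phi> (verts G) (verts H)" and b2: "bij_betw \<psi> (edges G) (edges H)"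
    and c: "\<forall>e\<in>edges G. src H (\<psi> e) = \<phi> (src G e) \<and> rng H (\<psi> e) = \<phi> (rng G e)"
    using assms(2) unfolding iso_via_def by auto
  have w: "\<forall>e\<in>edges G. src G e \<in> verts G \<and> rng G e \<in> verts G" using assms(1) unfolding wf_graph_def by auto
  show ?thesis unfolding iso_via_def
  proof (intro conjI ballI)
    show "bij_betw (inv_into (verts G) \<phi>) (verts H) (verts G)" using b1 by (rule bij_betw_inv_into)
    show "bij_betw (inv_into (edges G) \<psi>) (edges H) (edges G)" using b2 by (rule bij_betw_inv_into)
  next
    fix e assume e: "e \<in> edges H"
    define d where "d = inv_into (edges G) \<psi> e"
    have d: "d \<in> edges G" "\<psi> d = e" using e b2 unfolding d_def
      by (auto simp: bij_betw_def inv_into_into f_inv_into_f)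
    have i1: "inv_into (verts G) \<phi> (\<phi> x) = x" if "x \<in> verts G" for x
      using b1 that by (simp add: bij_betw_def)
    show "src G (inv_into (edges G) \<psi> e) = inv_into (verts G) \<phi> (src H e)"
      using d c w i1 unfolding d_def[symmetric] by metis
    show "rng G (inv_into (edges G) \<psi> e) = inv_into (verts G) \<phi> (rng H e)"
      using d c w i1 unfolding d_def[symmetric] by metis
  qed
qed

lemma iso_via_comp:
  assumes "iso_via G H \<phi> \<psi>" "iso_via H K \<phi>' \<psi>'"
  shows "iso_via G K (\<phi>' \<circ> \<phi>) (\<psi>' \<circ> \<psi>)"
proof -
  have "bij_betw \<psi> (edges G) (edges H)" using assms(1) unfolding iso_via_def by blast
  then have "\<forall>e\<in>edges G. \<psi> e \<in> edges H" by (auto simp: bij_betw_def)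
  then show ?thesis using assms unfolding iso_via_def
    by (auto intro: bij_betw_trans)
qed

lemma iso_via_wf: assumes "iso_via G H \<phi> \<psi>" "wf_graph G" shows "wf_graph H"
  unfolding wf_graph_def
proof
  fix e assume "e \<in> edges H"
  then obtain d where d: "d \<in> edges G" "e = \<psi> d" using assms(1) unfolding iso_via_def bij_betw_def by blast
  then show "src H e \<in> verts H \<and> rng H e \<in> verts H" using assms unfolding iso_via_def wf_graph_def bij_betw_def
    by auto
qed

lemma iso_via_finite: "iso_via G H \<phi> \<psi> \<Longrightarrow> finite (verts G) \<Longrightarrow> finite (verts H)"
  unfolding iso_via_def bij_betw_def by (metis finite_imageI)

lemma graph_iso_sym: "wf_graph G \<Longrightarrow> graph_iso G H \<Longrightarrow> graph_iso H G"
  unfolding graph_iso_iff by (blast dest: iso_via_inv)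

lemma graph_iso_trans: "graph_iso G H \<Longrightarrow> graph_iso H K \<Longrightarrow> graph_iso G K"
  unfolding graph_iso_iff by (blast dest: iso_via_comp)

lemma iso_via_refl: "iso_via G G id id"
  unfolding iso_via_def by auto

section \<open>Embedding\<close>

definition emb :: "('v,'e) graph \<Rightarrow> ('v \<Rightarrow> 'w) \<Rightarrow> ('e \<Rightarrow> 'f) \<Rightarrow> ('w,'f) graph" where
  "emb G \<phi> g = \<lparr>verts = \<phi> ` verts G, edges = g ` edges G,
     src = \<phi> \<circ> src G \<circ> inv_into (edges G) g, rng = \<phi> \<circ> rng G \<circ> inv_into (edges G) g\<rparr>"

lemma emb_iso: "inj_on \<phi> (verts G) \<Longrightarrow> inj_on g (edges G) \<Longrightarrow> iso_via G (emb G \<phi> g) \<phi> g"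
  unfolding iso_via_def emb_def bij_betw_def by (simp add: inv_into_f_f)

lemma embed_exists:
  fixes Z :: "('a,'b) graph"
  assumes "wf_graph Z" "finite (verts Z)" "inj_on \<phi> (verts Z)" "|edges Z| \<le>o |UNIV :: 't set|"
  shows "\<exists>(Z'::('w,'t) graph) \<psi>. iso_via Z Z' \<phi> \<psi> \<and> wf_graph Z' \<and> finite (verts Z')"
proof -
  obtain g :: "'b \<Rightarrow> 't" where "inj_on g (edges Z)" using assms(4) unfolding card_of_ordLeq[symmetric] by blast
  then have "iso_via Z (emb Z \<phi> g) \<phi> g" using assms(3) by (rule emb_iso[rotated])
  then show ?thesis using assms iso_via_wf iso_via_finite by blast
qed

lemma finite_inj_nat: "finite (A :: 'a set) \<Longrightarrow> \<exists>\<phi>::'a\<Rightarrow>nat. inj_on \<phi> A"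
  using finite_imp_inj_to_nat_seg by blast

section \<open>Adding edges\<close>

definition addS :: "('v,'e) graph \<Rightarrow> 'v \<Rightarrow> 'v \<Rightarrow> nat set \<Rightarrow> ('v,'e+nat) graph" where
  "addS G a b S = \<lparr>verts = verts G, edges = Inl ` edges G \<union> Inr ` S,
     src = (\<lambda>x. case x of Inl e \<Rightarrow> src G e | Inr m \<Rightarrow> a),
     rng = (\<lambda>x. case x of Inl e \<Rightarrow> rng G e | Inr m \<Rightarrow> b)\<rparr>"

lemma add_path_edges_addS: "add_path_edges G \<alpha> = addS G (src G (hd \<alpha>)) (rng G (last \<alpha>)) UNIV"
  unfolding add_path_edges_def addS_def by simp

lemma addS_wf: "wf_graph G \<Longrightarrow> a \<in> verts G \<Longrightarrow> b \<in> verts G \<Longrightarrow> wf_graph (addS G a b S)"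
  unfolding wf_graph_def addS_def by auto

lemma addS_verts[simp]: "verts (addS G a b S) = verts G" by (simp add: addS_def)

lemma addS_empty_iso: "iso_via G (addS G a b {}) id Inl"
  unfolding iso_via_def addS_def by (auto simp: bij_betw_def)

lemma addS_iso:
  assumes "iso_via Z W \<phi> \<psi>"
  shows "iso_via (addS Z a b S) (addS W (\<phi> a) (\<phi> b) S) \<phi> (map_sum \<psi> id)"
proof -
  have b: "bij_betw \<psi> (edges Z) (edges W)" and b1: "bij_betw \<phi> (verts Z) (verts W)"
   and c: "\<forall>e\<in>edges Z. src W (\<psi> e) = \<phi> (src Z e) \<and> rng W (\<psi> e) = \<phi> (rng Z e)"
    using assms unfolding iso_via_def by auto
  have "bij_betw (map_sum \<psi> id) (Inl ` edges Z \<union> Inr ` S) (Inl ` edges W \<union> Inr ` S)"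
  proof (rule bij_betw_byWitness[where f'="map_sum (inv_into (edges Z) \<psi>) id"])
    show "\<forall>a\<in>Inl ` edges Z \<union> Inr ` S. map_sum (inv_into (edges Z) \<psi>) id (map_sum \<psi> id a) = a"
      using b by (auto simp: bij_betw_def inv_into_f_f)
    show "\<forall>a'\<in>Inl ` edges W \<union> Inr ` S. map_sum \<psi> id (map_sum (inv_into (edges Z) \<psi>) id a') = a'"
      using b by (auto simp: bij_betw_def f_inv_into_f)
    show "map_sum \<psi> id ` (Inl ` edges Z \<union> Inr ` S) \<subseteq> Inl ` edges W \<union> Inr ` S"
      using b by (force simp: bij_betw_def)
    show "map_sum (inv_into (edges Z) \<psi>) id ` (Inl ` edges W \<union> Inr ` S) \<subseteq> Inl ` edges Z \<union> Inr ` S"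
      using b by (auto simp: bij_betw_def inv_into_into)
  qed
  then show ?thesis using b1 c unfolding iso_via_def addS_def by auto
qed

definition swp :: "('e + nat) + nat \<Rightarrow> ('e + nat) + nat" where
  "swp x = (case x of Inl (Inl e) \<Rightarrow> Inl (Inl e) | Inl (Inr m) \<Rightarrow> Inr m | Inr m \<Rightarrow> Inl (Inr m))"

lemma addS_swap:
  "iso_via (addS (addS X a c S) a d S') (addS (addS X a d S') a c S) id swp"
  unfolding iso_via_def
proof (intro conjI)
  show "bij_betw swp (edges (addS (addS X a c S) a d S')) (edges (addS (addS X a d S') a c S))"
    by (rule bij_betw_byWitness[where f'=swp]) (auto simp: swp_def addS_def)
next
  show "\<forall>e\<in>edges (addS (addS X a c S) a d S'). src (addS (addS X a d S') a c S) (swp e) = id (src (addS (addS X a c S) a d S') e) \<and>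
         rng (addS (addS X a d S') a c S) (swp e) = id (rng (addS (addS X a c S) a d S') e)"
    unfolding addS_def by (auto simp: swp_def)
qed (simp add: bij_betw_def)



section \<open>Cardinality\<close>

lemma card_nat_le: "infinite (UNIV::'t set) \<Longrightarrow> |UNIV::nat set| \<le>o |UNIV::'t set|"
  using infinite_iff_card_of_nat by blast

lemma card_times_nat:
  assumes "infinite (UNIV::'t set)" "|A| \<le>o |UNIV::'t set|"
  shows "|A \<times> (UNIV::nat set)| \<le>o |UNIV::'t set|"
  using card_of_Times_ordLeq_infinite_Field[of "|UNIV::'t set|" A "UNIV::nat set"] assms card_nat_le[OF assms(1)]
  by (simp add: Field_card_of card_of_Card_order card_of_card_order_on)

lemma card_plus:
  assumes "infinite (UNIV::'t set)" "|A| \<le>o |UNIV::'t set|" "|B| \<le>o |UNIV::'t set|"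
  shows "|A <+> B| \<le>o |UNIV::'t set|"
  using card_of_Plus_ordLeq_infinite_Field[of "|UNIV::'t set|" A B] assms
  by (simp add: Field_card_of card_of_Card_order card_of_card_order_on)

lemma card_sub: "A \<subseteq> B \<Longrightarrow> |B| \<le>o |UNIV::'t set| \<Longrightarrow> |A| \<le>o |UNIV::'t set|"
  using card_of_mono1 ordLeq_transitive by blast

lemma card_move_O:
  assumes "infinite (UNIV::'t set)" "|edges Y| \<le>o |UNIV::'t set|"
  shows "|edges (move_O Y v n p)| \<le>o |UNIV::'t set|"
proof -
  have "edges (move_O Y v n p) \<subseteq> edges Y \<times> UNIV" unfolding move_O_def by auto
  then show ?thesis using card_sub card_times_nat assms by blast
qed

lemma card_move_I:
  assumes "infinite (UNIV::'t set)" "|edges Y| \<le>o |UNIV::'t set|"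
  shows "|edges (move_I Y v n p)| \<le>o |UNIV::'t set|"
proof -
  have "edges (move_I Y v n p) \<subseteq> edges Y \<times> UNIV" unfolding move_I_def by auto
  then show ?thesis using card_sub card_times_nat assms by blast
qed

lemma card_move_R:
  assumes "infinite (UNIV::'t set)" "|edges Y| \<le>o |UNIV::'t set|"
  shows "|edges (move_R Y u f v)| \<le>o |UNIV::'t set|"
proof -
  have "edges (move_R Y u f v) \<subseteq> edges Y <+> edges Y" unfolding move_R_def in_edges_def by auto
  then show ?thesis using card_sub card_plus assms by blast
qed

lemma card_addS:
  assumes "infinite (UNIV::'t set)" "|edges Y| \<le>o |UNIV::'t set|"
  shows "|edges (addS Y a b S)| \<le>o |UNIV::'t set|"
proof -
  have "edges (addS Y a b S) \<subseteq> edges Y <+> (UNIV::nat set)" unfolding addS_def by auto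
  then show ?thesis using card_sub card_plus assms card_nat_le by blast
qed

lemma card_UNIV_t: "|edges (Y::('a,'t) graph)| \<le>o |UNIV::'t set|"
  by (rule card_of_mono1) simp

section \<open>Well-formedness of moves\<close>

lemma move_O_wf:
  assumes "wf_graph Y" "move_O_ok Y v n p"
  shows "wf_graph (move_O Y v n p)"
  unfolding wf_graph_def
proof
  fix x assume x: "x \<in> edges (move_O Y v n p)"
  obtain e i where ei: "x = (e,i)" "e \<in> edges Y" "(rng Y e \<noteq> v \<and> i = 0) \<or> (rng Y e = v \<and> i \<in> {1..n})"
    using x unfolding move_O_def by auto
  have w: "src Y e \<in> verts Y" "rng Y e \<in> verts Y" using assms(1) ei(2) unfolding wf_graph_def by auto
  have p: "src Y e = v \<Longrightarrow> p e \<in> {1..n}" using assms(2) ei(2)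
    unfolding move_O_ok_def is_partition_def out_edges_def by auto
  show "src (move_O Y v n p) x \<in> verts (move_O Y v n p) \<and> rng (move_O Y v n p) x \<in> verts (move_O Y v n p)"
    using ei w p unfolding move_O_def by auto
qed

lemma move_O_finite: "finite (verts Y) \<Longrightarrow> finite (verts (move_O Y v n p))"
proof -
  assume "finite (verts Y)"
  moreover have "verts (move_O Y v n p) \<subseteq> verts Y \<times> {0} \<union> {v} \<times> {1..n}" unfolding move_O_def by auto
  moreover have "finite (verts Y \<times> {0::nat} \<union> {v} \<times> {1..n})" using calculation(1) by simp
  ultimately show ?thesis using finite_subset by blast
qed

lemma move_I_wf:
  assumes "wf_graph Y" "move_I_ok Y v n p"
  shows "wf_graph (move_I Y v n p)"
  unfolding wf_graph_def
proof
  fix x assume x: "x \<in> edges (move_I Y v n p)"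
  obtain e i where ei: "x = (e,i)" "e \<in> edges Y" "(src Y e \<noteq> v \<and> i = 0) \<or> (src Y e = v \<and> i \<in> {1..n})"
    using x unfolding move_I_def by auto
  have w: "src Y e \<in> verts Y" "rng Y e \<in> verts Y" using assms(1) ei(2) unfolding wf_graph_def by auto
  have p: "rng Y e = v \<Longrightarrow> p e \<in> {1..n}" using assms(2) ei(2)
    unfolding move_I_ok_def is_partition_def in_edges_def by auto
  show "src (move_I Y v n p) x \<in> verts (move_I Y v n p) \<and> rng (move_I Y v n p) x \<in> verts (move_I Y v n p)"
    using ei w p unfolding move_I_def by auto
qed

lemma move_I_finite: "finite (verts Y) \<Longrightarrow> finite (verts (move_I Y v n p))"
proof -
  assume "finite (verts Y)"
  moreover have "verts (move_I Y v n p) \<subseteq> verts Y \<times> {0} \<union> {v} \<times> {1..n}" unfolding move_I_def by auto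
  moreover have "finite (verts Y \<times> {0::nat} \<union> {v} \<times> {1..n})" using calculation(1) by simp
  ultimately show ?thesis using finite_subset by blast
qed

lemma move_R_wf:
  assumes "wf_graph Y" "move_R_ok Y u f v"
  shows "wf_graph (move_R Y u f v)"
proof -
  have f: "f \<in> edges Y" "src Y f = u" using assms(2) unfolding move_R_ok_def out_edges_def by auto
  have vu: "v \<noteq> u" if "e \<in> in_edges Y u" for e
  proof
    assume "v = u"
    then have "e \<in> out_edges Y u" using that assms(2) unfolding move_R_ok_def in_edges_def out_edges_def by auto
    then have "e = f" using assms(2) unfolding move_R_ok_def by auto
    then show False using that assms(2) unfolding move_R_ok_def in_edges_def by auto
  qed
  have nsrc: "src Y e \<noteq> u" if "e \<in> edges Y" "e \<noteq> f" for e
    using that assms(2) unfolding move_R_ok_def out_edges_def by auto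
  show ?thesis
    using assms f vu nsrc unfolding wf_graph_def move_R_def move_R_ok_def
    by (auto simp: in_edges_def)
qed

lemma move_R_finite: "finite (verts Y) \<Longrightarrow> finite (verts (move_R Y u f v))"
  unfolding move_R_def by simp

section \<open>Isomorphic graphs are move equivalent\<close>

lemma trivial_O_ok:
  assumes "wf_graph Z" "e \<in> edges Z"
  shows "move_O_ok Z (src Z e) 1 (\<lambda>_. 1)"
proof -
  have "card {i \<in> {1..1::nat}. infinite {e' \<in> out_edges Z (src Z e). (1::nat) = i}} \<le> card {1::nat}"
    by (rule card_mono) auto
  then show ?thesis using assms unfolding move_O_ok_def is_partition_def is_sink_def out_edges_def wf_graph_def
    by auto
qed

lemma trivial_O_iso:
  assumes "wf_graph Z" "v \<in> verts Z"
  shows "iso_via (move_O Z v 1 (\<lambda>_. 1)) Z fst fst"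
  unfolding iso_via_def
proof (intro conjI)
  show "bij_betw fst (verts (move_O Z v 1 (\<lambda>_. 1))) (verts Z)"
    by (rule bij_betw_byWitness[where f'="\<lambda>w. if w = v then (v,1) else (w,0)"])
       (use assms in \<open>auto simp: move_O_def\<close>)
  show "bij_betw fst (edges (move_O Z v 1 (\<lambda>_. 1))) (edges Z)"
    by (rule bij_betw_byWitness[where f'="\<lambda>e. (e, if rng Z e = v then 1 else 0)"])
       (auto simp: move_O_def)
  show "\<forall>e\<in>edges (move_O Z v 1 (\<lambda>_. 1)). src Z (fst e) = fst (src (move_O Z v 1 (\<lambda>_. 1)) e) \<and>
        rng Z (fst e) = fst (rng (move_O Z v 1 (\<lambda>_. 1)) e)"
    by (auto simp: move_O_def)
qed

lemma iso_move_step: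
  assumes "wf_graph Z" "finite (verts Z)" "wf_graph Z'" "finite (verts Z')" "e \<in> edges Z" "graph_iso Z Z'"
  shows "move_step Z Z'"
proof -
  have v: "src Z e \<in> verts Z" using assms(1,5) unfolding wf_graph_def by auto
  have "graph_iso (move_O Z (src Z e) 1 (\<lambda>_. 1)) Z'"
    using trivial_O_iso[OF assms(1) v] assms(6) iso_via_graph_iso graph_iso_trans by blast
  then show ?thesis unfolding move_step_def using assms trivial_O_ok[OF assms(1,5)] by blast
qed

lemma iso_equivclp:
  assumes "wf_graph Z" "finite (verts Z)" "wf_graph Z'" "finite (verts Z')" "edges Z \<noteq> {}" "graph_iso Z Z'"
  shows "equivclp move_step Z Z'"
  using iso_move_step[OF assms(1-4) _ assms(6)] assms(5) by blast

section \<open>Absorption\<close>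

lemma absorb:
  fixes h :: "nat \<Rightarrow> 'e"
  assumes "verts Z' = verts Z" "src Z' = src Z" "rng Z' = rng Z" "edges Z \<subseteq> edges Z'"
    and "edges Z' - edges Z \<subseteq> range h"
    and "\<forall>e\<in>edges Z' - edges Z. src Z e = x \<and> rng Z e = y"
    and "infinite {e\<in>edges Z. src Z e = x \<and> rng Z e = y}"
  shows "\<exists>\<psi>. iso_via Z' Z id \<psi>"
proof -
  define Q where "Q = {e\<in>edges Z. src Z e = x \<and> rng Z e = y}"
  define D where "D = edges Z' - edges Z"
  have iQ: "infinite Q" using assms(7) Q_def by simp
  have 1: "|D| \<le>o |range h|" using assms(5) D_def card_of_mono1 by metis
  have 2: "|range h| \<le>o |UNIV::nat set|" by (rule card_of_image)
  have 3: "|UNIV::nat set| \<le>o |Q|" using iQ infinite_iff_card_of_nat by metis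
  have "|D| \<le>o |Q|" using ordLeq_transitive[OF ordLeq_transitive[OF 1 2] 3] .
  then have 4: "|Q <+> D| =o |Q|" using card_of_Plus_infinite1 iQ by metis
  have 5: "|Q \<union> D| \<le>o |Q|" using ordLeq_ordIso_trans[OF card_of_Un_Plus_ordLeq 4] .
  have 6: "|Q| \<le>o |Q \<union> D|" by (rule card_of_mono1) simp
  have "|Q \<union> D| =o |Q|" using 5 6 ordIso_iff_ordLeq by metis
  then obtain k where k: "bij_betw k (Q \<union> D) Q" using card_of_ordIso by metis
  define \<psi> where "\<psi> e = (if e \<in> Q \<union> D then k e else e)" for e
  have e1: "edges Z' = (Q \<union> D) \<union> (edges Z - Q)" using assms(4) unfolding Q_def D_def by blast
  have e2: "edges Z = Q \<union> (edges Z - Q)" unfolding Q_def by blast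
  have b1: "bij_betw \<psi> (Q \<union> D) Q" 
    using k bij_betw_cong[of "Q \<union> D" \<psi> k Q] unfolding \<psi>_def by simp
  have b2: "bij_betw \<psi> (edges Z - Q) (edges Z - Q)"
  proof -
    have "bij_betw id (edges Z - Q) (edges Z - Q)" by simp
    moreover have "\<forall>e\<in>edges Z - Q. \<psi> e = id e" unfolding \<psi>_def D_def by simp
    ultimately show ?thesis using bij_betw_cong by metis
  qed
  have "bij_betw \<psi> ((Q \<union> D) \<union> (edges Z - Q)) (Q \<union> (edges Z - Q))"
    by (rule bij_betw_combine[OF b1 b2]) blast
  then have b: "bij_betw \<psi> (edges Z') (edges Z)" using e1 e2 by simp
  have c: "\<forall>e\<in>edges Z'. src Z (\<psi> e) = src Z e \<and> rng Z (\<psi> e) = rng Z e"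
  proof
    fix e assume e: "e \<in> edges Z'"
    show "src Z (\<psi> e) = src Z e \<and> rng Z (\<psi> e) = rng Z e"
    proof (cases "e \<in> Q \<union> D")
      case True
      then have "k e \<in> Q" using k unfolding bij_betw_def by blast
      then have "src Z (k e) = x \<and> rng Z (k e) = y" unfolding Q_def by blast
      moreover have "src Z e = x \<and> rng Z e = y" using True assms(6) unfolding Q_def D_def by blast
      ultimately show ?thesis using True unfolding \<psi>_def by simp
    qed (simp add: \<psi>_def)
  qed
  have "iso_via Z' Z id \<psi>" unfolding iso_via_def using b c assms(1-3) by simp
  then show ?thesis by blast
qed


lemma partition_image: "is_partition (\<psi> ` A) n p \<longleftrightarrow> is_partition A n (p \<circ> \<psi>)"
  unfolding is_partition_def by auto

lemma parts_image:
  assumes "inj_on \<psi> A"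
  shows "{i \<in> {1..n}. infinite {e \<in> \<psi> ` A. p e = i}} = {i \<in> {1..n}. infinite {e \<in> A. (p \<circ> \<psi>) e = i}}"
proof -
  have "{e \<in> \<psi> ` A. p e = i} = \<psi> ` {e \<in> A. (p \<circ> \<psi>) e = i}" for i by auto
  moreover have "inj_on \<psi> {e \<in> A. (p \<circ> \<psi>) e = i}" for i using assms by (rule inj_on_subset) auto
  then have "finite (\<psi> ` {e \<in> A. (p \<circ> \<psi>) e = i}) \<longleftrightarrow> finite {e \<in> A. (p \<circ> \<psi>) e = i}" for i
    by (rule finite_image_iff)
  ultimately show ?thesis by simp
qed

locale isoloc =
  fixes X :: "('a,'b) graph" and Y :: "('c,'d) graph" and \<phi> \<psi>
  assumes iso: "iso_via X Y \<phi> \<psi>" and wfX: "wf_graph X" and wfY: "wf_graph Y"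
begin

definition "\<phi>i = inv_into (verts X) \<phi>"
definition "\<psi>i = inv_into (edges X) \<psi>"

lemma bphi: "bij_betw \<phi> (verts X) (verts Y)" and bpsi: "bij_betw \<psi> (edges X) (edges Y)"
  and comp: "\<And>e. e \<in> edges X \<Longrightarrow> src Y (\<psi> e) = \<phi> (src X e) \<and> rng Y (\<psi> e) = \<phi> (rng X e)"
  using iso unfolding iso_via_def by auto

lemma phi_in: "w \<in> verts X \<Longrightarrow> \<phi> w \<in> verts Y" using bphi by (auto simp: bij_betw_def)
lemma phii_in: "w \<in> verts Y \<Longrightarrow> \<phi>i w \<in> verts X" using bphi unfolding \<phi>i_def by (auto simp: bij_betw_def inv_into_into)
lemma phii_phi: "w \<in> verts X \<Longrightarrow> \<phi>i (\<phi> w) = w" using bphi unfolding \<phi>i_def by (auto simp: bij_betw_def)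
lemma phi_phii: "w \<in> verts Y \<Longrightarrow> \<phi> (\<phi>i w) = w" using bphi unfolding \<phi>i_def by (auto simp: bij_betw_def f_inv_into_f)
lemma psi_in: "e \<in> edges X \<Longrightarrow> \<psi> e \<in> edges Y" using bpsi by (auto simp: bij_betw_def)
lemma psii_in: "e \<in> edges Y \<Longrightarrow> \<psi>i e \<in> edges X" using bpsi unfolding \<psi>i_def by (auto simp: bij_betw_def inv_into_into)
lemma psii_psi: "e \<in> edges X \<Longrightarrow> \<psi>i (\<psi> e) = e" using bpsi unfolding \<psi>i_def by (auto simp: bij_betw_def)
lemma psi_psii: "e \<in> edges Y \<Longrightarrow> \<psi> (\<psi>i e) = e" using bpsi unfolding \<psi>i_def by (auto simp: bij_betw_def f_inv_into_f)
lemma srcX: "e \<in> edges X \<Longrightarrow> src X e \<in> verts X" and rngX: "e \<in> edges X \<Longrightarrow> rng X e \<in> verts X"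
  using wfX unfolding wf_graph_def by auto
lemma phi_eq: "w \<in> verts X \<Longrightarrow> w' \<in> verts X \<Longrightarrow> \<phi> w = \<phi> w' \<longleftrightarrow> w = w'"
  using bphi by (auto simp: bij_betw_def inj_on_def)
lemma src_eq: "e \<in> edges X \<Longrightarrow> v \<in> verts Y \<Longrightarrow> src Y (\<psi> e) = v \<longleftrightarrow> src X e = \<phi>i v"
  by (metis comp phi_phii phii_in phii_phi srcX)
lemma rng_eq: "e \<in> edges X \<Longrightarrow> v \<in> verts Y \<Longrightarrow> rng Y (\<psi> e) = v \<longleftrightarrow> rng X e = \<phi>i v"
  by (metis comp phi_phii phii_in phii_phi rngX)
lemma phii_eq: "w \<in> verts Y \<Longrightarrow> v \<in> verts Y \<Longrightarrow> \<phi>i w = \<phi>i v \<longleftrightarrow> w = v"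
  by (metis phi_phii)
lemma psi_inj: "inj_on \<psi> (edges X)" using bpsi by (auto simp: bij_betw_def)

lemma out_img: "v \<in> verts Y \<Longrightarrow> out_edges Y v = \<psi> ` out_edges X (\<phi>i v)"
  unfolding out_edges_def
proof (intro equalityI subsetI)
  fix e assume v: "v \<in> verts Y" and e: "e \<in> {e \<in> edges Y. src Y e = v}"
  then have "\<psi>i e \<in> {e \<in> edges X. src X e = \<phi>i v}" using psii_in psi_psii src_eq by (metis (mono_tags, lifting) mem_Collect_eq)
  then show "e \<in> \<psi> ` {e \<in> edges X. src X e = \<phi>i v}" using e psi_psii by (metis (no_types, lifting) image_eqI mem_Collect_eq)
qed (auto simp: psi_in src_eq)

lemma in_img: "v \<in> verts Y \<Longrightarrow> in_edges Y v = \<psi> ` in_edges X (\<phi>i v)"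
  unfolding in_edges_def
proof (intro equalityI subsetI)
  fix e assume v: "v \<in> verts Y" and e: "e \<in> {e \<in> edges Y. rng Y e = v}"
  then have "\<psi>i e \<in> {e \<in> edges X. rng X e = \<phi>i v}" using psii_in psi_psii rng_eq by (metis (mono_tags, lifting) mem_Collect_eq)
  then show "e \<in> \<psi> ` {e \<in> edges X. rng X e = \<phi>i v}" using e psi_psii by (metis (no_types, lifting) image_eqI mem_Collect_eq)
qed (auto simp: psi_in rng_eq)

lemma out_sub: "out_edges X w \<subseteq> edges X" unfolding out_edges_def by auto
lemma in_sub: "in_edges X w \<subseteq> edges X" unfolding in_edges_def by auto

lemma transport_O:
  assumes ok: "move_O_ok Y v n p"
  shows "move_O_ok X (\<phi>i v) n (p \<circ> \<psi>) \<and>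
         iso_via (move_O X (\<phi>i v) n (p \<circ> \<psi>)) (move_O Y v n p) (map_prod \<phi> id) (map_prod \<psi> id)"
proof -
  have v: "v \<in> verts Y" using ok unfolding move_O_ok_def by auto
  define v' where "v' = \<phi>i v"
  have v': "v' \<in> verts X" "\<phi> v' = v" using v phii_in phi_phii v'_def by auto
  have oi: "out_edges Y v = \<psi> ` out_edges X v'" using out_img[OF v] v'_def by simp
  have injo: "inj_on \<psi> (out_edges X v')" using psi_inj out_sub inj_on_subset by blast
  have ok': "move_O_ok X v' n (p \<circ> \<psi>)"
    using ok v' oi parts_image[OF injo, of n p] partition_image[of \<psi> "out_edges X v'" n p]
    unfolding move_O_ok_def is_sink_def by auto
  have vv: "\<phi>i v = v'" using v'_def by simp
  have vx: "w \<in> verts X \<Longrightarrow> \<phi> w = v \<longleftrightarrow> w = v'" for w using phi_eq[of w v'] v' by auto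
  have sx: "e \<in> edges X \<Longrightarrow> src Y (\<psi> e) = v \<longleftrightarrow> src X e = v'" for e using src_eq v v'_def by simp
  have rx: "e \<in> edges X \<Longrightarrow> rng Y (\<psi> e) = v \<longleftrightarrow> rng X e = v'" for e using rng_eq v v'_def by simp
  have vy: "w \<in> verts Y \<Longrightarrow> \<phi>i w = v' \<longleftrightarrow> w = v" for w using phii_eq[of w v] v unfolding v'_def by blast
  have bv: "bij_betw (map_prod \<phi> id) (verts (move_O X v' n (p \<circ> \<psi>))) (verts (move_O Y v n p))"
  proof (rule bij_betw_byWitness[where f'="map_prod \<phi>i id"])
    show "\<forall>a\<in>verts (move_O X v' n (p \<circ> \<psi>)). map_prod \<phi>i id (map_prod \<phi> id a) = a"
      unfolding move_O_def using phii_phi v' by auto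
    show "\<forall>a'\<in>verts (move_O Y v n p). map_prod \<phi> id (map_prod \<phi>i id a') = a'"
      unfolding move_O_def using phi_phii v vv by auto
    show "map_prod \<phi> id ` verts (move_O X v' n (p \<circ> \<psi>)) \<subseteq> verts (move_O Y v n p)"
      unfolding move_O_def using phi_in vx v' by auto
    show "map_prod \<phi>i id ` verts (move_O Y v n p) \<subseteq> verts (move_O X v' n (p \<circ> \<psi>))"
      unfolding move_O_def using phii_in vy v' vv by auto
  qed
  have be: "bij_betw (map_prod \<psi> id) (edges (move_O X v' n (p \<circ> \<psi>))) (edges (move_O Y v n p))"
  proof (rule bij_betw_byWitness[where f'="map_prod \<psi>i id"])
    show "\<forall>a\<in>edges (move_O X v' n (p \<circ> \<psi>)). map_prod \<psi>i id (map_prod \<psi> id a) = a"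
      unfolding move_O_def using psii_psi by auto
    show "\<forall>a'\<in>edges (move_O Y v n p). map_prod \<psi> id (map_prod \<psi>i id a') = a'"
      unfolding move_O_def using psi_psii by auto
    show "map_prod \<psi> id ` edges (move_O X v' n (p \<circ> \<psi>)) \<subseteq> edges (move_O Y v n p)"
      unfolding move_O_def using psi_in rx by auto
    show "map_prod \<psi>i id ` edges (move_O Y v n p) \<subseteq> edges (move_O X v' n (p \<circ> \<psi>))"
      unfolding move_O_def using psii_in rx psi_psii by (force)
  qed
  have c: "\<forall>e\<in>edges (move_O X v' n (p \<circ> \<psi>)).
      src (move_O Y v n p) (map_prod \<psi> id e) = map_prod \<phi> id (src (move_O X v' n (p \<circ> \<psi>)) e) \<and>
      rng (move_O Y v n p) (map_prod \<psi> id e) = map_prod \<phi> id (rng (move_O X v' n (p \<circ> \<psi>)) e)"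
    unfolding move_O_def using sx rx comp v' by auto
  show ?thesis using ok' bv be c unfolding iso_via_def v'_def by simp
qed

lemma transport_I:
  assumes ok: "move_I_ok Y v n p"
  shows "move_I_ok X (\<phi>i v) n (p \<circ> \<psi>) \<and>
         iso_via (move_I X (\<phi>i v) n (p \<circ> \<psi>)) (move_I Y v n p) (map_prod \<phi> id) (map_prod \<psi> id)"
proof -
  have v: "v \<in> verts Y" using ok unfolding move_I_ok_def by auto
  define v' where "v' = \<phi>i v"
  have v': "v' \<in> verts X" "\<phi> v' = v" using v phii_in phi_phii v'_def by auto
  have oi: "out_edges Y v = \<psi> ` out_edges X v'" using out_img[OF v] v'_def by simp
  have ii: "in_edges Y v = \<psi> ` in_edges X v'" using in_img[OF v] v'_def by simp
  have inji: "inj_on \<psi> (in_edges X v')" using psi_inj in_sub inj_on_subset by blast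
  have injo: "inj_on \<psi> (out_edges X v')" using psi_inj out_sub inj_on_subset by blast
  have ok': "move_I_ok X v' n (p \<circ> \<psi>)"
    using ok v' oi ii partition_image[of \<psi> "in_edges X v'" n p] injo finite_image_iff[OF injo]
    unfolding move_I_ok_def is_source_def is_regular_def by auto
  have vv: "\<phi>i v = v'" using v'_def by simp
  have vx: "w \<in> verts X \<Longrightarrow> \<phi> w = v \<longleftrightarrow> w = v'" for w using phi_eq[of w v'] v' by auto
  have sx: "e \<in> edges X \<Longrightarrow> src Y (\<psi> e) = v \<longleftrightarrow> src X e = v'" for e using src_eq v v'_def by simp
  have rx: "e \<in> edges X \<Longrightarrow> rng Y (\<psi> e) = v \<longleftrightarrow> rng X e = v'" for e using rng_eq v v'_def by simp
  have vy: "w \<in> verts Y \<Longrightarrow> \<phi>i w = v' \<longleftrightarrow> w = v" for w using phii_eq[of w v] v unfolding v'_def by blast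
  have bv: "bij_betw (map_prod \<phi> id) (verts (move_I X v' n (p \<circ> \<psi>))) (verts (move_I Y v n p))"
  proof (rule bij_betw_byWitness[where f'="map_prod \<phi>i id"])
    show "\<forall>a\<in>verts (move_I X v' n (p \<circ> \<psi>)). map_prod \<phi>i id (map_prod \<phi> id a) = a"
      unfolding move_I_def using phii_phi v' by auto
    show "\<forall>a'\<in>verts (move_I Y v n p). map_prod \<phi> id (map_prod \<phi>i id a') = a'"
      unfolding move_I_def using phi_phii v vv by auto
    show "map_prod \<phi> id ` verts (move_I X v' n (p \<circ> \<psi>)) \<subseteq> verts (move_I Y v n p)"
      unfolding move_I_def using phi_in vx v' by auto
    show "map_prod \<phi>i id ` verts (move_I Y v n p) \<subseteq> verts (move_I X v' n (p \<circ> \<psi>))"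
      unfolding move_I_def using phii_in vy v' vv by auto
  qed
  have be: "bij_betw (map_prod \<psi> id) (edges (move_I X v' n (p \<circ> \<psi>))) (edges (move_I Y v n p))"
  proof (rule bij_betw_byWitness[where f'="map_prod \<psi>i id"])
    show "\<forall>a\<in>edges (move_I X v' n (p \<circ> \<psi>)). map_prod \<psi>i id (map_prod \<psi> id a) = a"
      unfolding move_I_def using psii_psi by auto
    show "\<forall>a'\<in>edges (move_I Y v n p). map_prod \<psi> id (map_prod \<psi>i id a') = a'"
      unfolding move_I_def using psi_psii by auto
    show "map_prod \<psi> id ` edges (move_I X v' n (p \<circ> \<psi>)) \<subseteq> edges (move_I Y v n p)"
      unfolding move_I_def using psi_in sx by auto
    show "map_prod \<psi>i id ` edges (move_I Y v n p) \<subseteq> edges (move_I X v' n (p \<circ> \<psi>))"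
      unfolding move_I_def using psii_in sx psi_psii by (force)
  qed
  have c: "\<forall>e\<in>edges (move_I X v' n (p \<circ> \<psi>)).
      src (move_I Y v n p) (map_prod \<psi> id e) = map_prod \<phi> id (src (move_I X v' n (p \<circ> \<psi>)) e) \<and>
      rng (move_I Y v n p) (map_prod \<psi> id e) = map_prod \<phi> id (rng (move_I X v' n (p \<circ> \<psi>)) e)"
    unfolding move_I_def using sx rx comp v' by auto
  show ?thesis using ok' bv be c unfolding iso_via_def v'_def by simp
qed

lemma transport_R:
  assumes ok: "move_R_ok Y u f v"
  shows "move_R_ok X (\<phi>i u) (\<psi>i f) (\<phi>i v) \<and>
         iso_via (move_R X (\<phi>i u) (\<psi>i f) (\<phi>i v)) (move_R Y u f v) \<phi> (map_sum \<psi> \<psi>)"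
proof -
  have u: "u \<in> verts Y" and v: "v \<in> verts Y" and reg: "is_regular Y u" and of: "out_edges Y u = {f}"
    and rf: "rng Y f \<noteq> u" and ie: "\<forall>e\<in>in_edges Y u. src Y e = v"
    using ok unfolding move_R_ok_def by auto
  have f: "f \<in> edges Y" using of unfolding out_edges_def by auto
  define u' where "u' = \<phi>i u"
  define v' where "v' = \<phi>i v"
  define f' where "f' = \<psi>i f"
  have u': "u' \<in> verts X" "\<phi> u' = u" using u phii_in phi_phii u'_def by auto
  have v': "v' \<in> verts X" "\<phi> v' = v" using v phii_in phi_phii v'_def by auto
  have f': "f' \<in> edges X" "\<psi> f' = f" using f psii_in psi_psii f'_def by auto
  have oi: "out_edges Y u = \<psi> ` out_edges X u'" using out_img[OF u] u'_def by simp
  have ii: "in_edges Y u = \<psi> ` in_edges X u'" using in_img[OF u] u'_def by simp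
  have injo: "inj_on \<psi> (out_edges X u')" using psi_inj out_sub inj_on_subset by blast
  have of': "out_edges X u' = {f'}"
  proof -
    have "\<psi> ` out_edges X u' = \<psi> ` {f'}" using oi of f' by simp
    then show ?thesis using inj_on_image_eq_iff[OF psi_inj] out_sub f' by (metis empty_subsetI insert_subset)
  qed
  have rf': "rng X f' \<noteq> u'" using rf f' comp u' by metis
  have ie': "\<forall>e\<in>in_edges X u'. src X e = v'"
  proof
    fix e assume e: "e \<in> in_edges X u'"
    then have "\<psi> e \<in> in_edges Y u" using ii by auto
    then have "src Y (\<psi> e) = v" using ie by auto
    then show "src X e = v'" using src_eq e in_sub v v'_def by blast
  qed
  have ok': "move_R_ok X u' f' v'"
    using u' v' of' rf' ie' unfolding move_R_ok_def is_regular_def by auto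
  have vx: "w \<in> verts X \<Longrightarrow> \<phi> w = u \<longleftrightarrow> w = u'" for w using phi_eq[of w u'] u' by auto
  have vy: "w \<in> verts Y \<Longrightarrow> \<phi>i w = u' \<longleftrightarrow> w = u" for w using phii_eq[of w u] u unfolding u'_def by blast
  have bv: "bij_betw \<phi> (verts (move_R X u' f' v')) (verts (move_R Y u f v))"
  proof -
    have i: "inj_on \<phi> (verts X)" and im: "\<phi> ` verts X = verts Y" using bphi by (auto simp: bij_betw_def)
    have "\<phi> ` (verts X - {u'}) = \<phi> ` verts X - \<phi> ` {u'}"
      by (rule inj_on_image_set_diff[OF i]) (use u' in auto)
    then have "\<phi> ` (verts X - {u'}) = verts Y - {u}" using im u' by simp
    moreover have "inj_on \<phi> (verts X - {u'})" using i by (rule inj_on_subset) auto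
    ultimately show ?thesis unfolding move_R_def bij_betw_def by simp
  qed
  have rx: "e \<in> edges X \<Longrightarrow> rng Y (\<psi> e) = u \<longleftrightarrow> rng X e = u'" for e using rng_eq u u'_def by simp
  have fx: "e \<in> edges X \<Longrightarrow> \<psi> e = f \<longleftrightarrow> e = f'" for e using f' psi_inj by (metis inj_on_eq_iff)
  have be: "bij_betw (map_sum \<psi> \<psi>) (edges (move_R X u' f' v')) (edges (move_R Y u f v))"
  proof (rule bij_betw_byWitness[where f'="map_sum \<psi>i \<psi>i"])
    show "\<forall>a\<in>edges (move_R X u' f' v'). map_sum \<psi>i \<psi>i (map_sum \<psi> \<psi> a) = a"
      unfolding move_R_def in_edges_def using psii_psi by auto
    show "\<forall>a'\<in>edges (move_R Y u f v). map_sum \<psi> \<psi> (map_sum \<psi>i \<psi>i a') = a'"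
      unfolding move_R_def in_edges_def using psi_psii by auto
    show "map_sum \<psi> \<psi> ` edges (move_R X u' f' v') \<subseteq> edges (move_R Y u f v)"
      unfolding move_R_def in_edges_def using psi_in rx fx by auto
    show "map_sum \<psi>i \<psi>i ` edges (move_R Y u f v) \<subseteq> edges (move_R X u' f' v')"
      unfolding move_R_def in_edges_def using psii_in rx fx psi_psii by force
  qed
  have c: "\<forall>e\<in>edges (move_R X u' f' v').
      src (move_R Y u f v) (map_sum \<psi> \<psi> e) = \<phi> (src (move_R X u' f' v') e) \<and>
      rng (move_R Y u f v) (map_sum \<psi> \<psi> e) = \<phi> (rng (move_R X u' f' v') e)"
    unfolding move_R_def in_edges_def using comp v' f' by auto
  show ?thesis using ok' bv be c unfolding iso_via_def u'_def v'_def f'_def by simp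
qed

end


lemma move_O_simps:
  "(x,i) \<in> edges (move_O G v n p) \<longleftrightarrow> x \<in> edges G \<and> (rng G x \<noteq> v \<and> i = 0 \<or> rng G x = v \<and> 1 \<le> i \<and> i \<le> n)"
  "(w,i) \<in> verts (move_O G v n p) \<longleftrightarrow> (w \<in> verts G \<and> w \<noteq> v \<and> i = 0 \<or> w = v \<and> 1 \<le> i \<and> i \<le> n)"
  "src (move_O G v n p) (x,i) = (if src G x = v then (v, p x) else (src G x, 0))"
  "rng (move_O G v n p) (x,i) = (if rng G x = v then (v, i) else (rng G x, 0))"
  unfolding move_O_def by auto

lemma move_I_simps:
  "(x,i) \<in> edges (move_I G v n p) \<longleftrightarrow> x \<in> edges G \<and> (src G x \<noteq> v \<and> i = 0 \<or> src G x = v \<and> 1 \<le> i \<and> i \<le> n)"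
  "(w,i) \<in> verts (move_I G v n p) \<longleftrightarrow> (w \<in> verts G \<and> w \<noteq> v \<and> i = 0 \<or> w = v \<and> 1 \<le> i \<and> i \<le> n)"
  "src (move_I G v n p) (x,i) = (if src G x = v then (v, i) else (src G x, 0))"
  "rng (move_I G v n p) (x,i) = (if rng G x = v then (v, p x) else (rng G x, 0))"
  unfolding move_I_def by auto

lemma move_R_simps:
  "Inl x \<in> edges (move_R G u f v) \<longleftrightarrow> x \<in> edges G \<and> x \<noteq> f \<and> rng G x \<noteq> u"
  "Inr x \<in> edges (move_R G u f v) \<longleftrightarrow> x \<in> edges G \<and> rng G x = u"
  "verts (move_R G u f v) = verts G - {u}"
  "src (move_R G u f v) (Inl x) = src G x" "src (move_R G u f v) (Inr x) = v"
  "rng (move_R G u f v) (Inl x) = rng G x" "rng (move_R G u f v) (Inr x) = rng G f"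
  unfolding move_R_def in_edges_def by auto

lemma embed_nat:
  fixes Z :: "('a,'b) graph"
  assumes "wf_graph Z" "finite (verts Z)" "|edges Z| \<le>o |UNIV :: 't set|"
  shows "\<exists>(Z'::(nat,'t) graph) \<phi> \<psi>. iso_via Z' Z \<phi> \<psi> \<and> wf_graph Z' \<and> finite (verts Z')"
proof -
  obtain \<phi>0 :: "'a \<Rightarrow> nat" where "inj_on \<phi>0 (verts Z)" using finite_inj_nat assms(2) by blast
  then obtain Z' :: "(nat,'t) graph" and \<psi> where "iso_via Z Z' \<phi>0 \<psi>" "wf_graph Z'" "finite (verts Z')"
    using embed_exists[OF assms(1,2) _ assms(3)] by blast
  then show ?thesis using iso_via_inv assms(1) by blast
qed

lemma step_O:
  fixes X :: "(nat,'t) graph"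
  assumes "iso_via X Y \<phi> \<psi>" "wf_graph X" "finite (verts X)" "wf_graph Y" "finite (verts Y)"
    "move_O_ok Y v n p" "infinite (UNIV::'t set)" "|edges Y| \<le>o |UNIV::'t set|"
  shows "\<exists>(X'::(nat,'t) graph) \<phi>' \<psi>'. move_step X X' \<and> iso_via X' (move_O Y v n p) \<phi>' \<psi>' \<and> wf_graph X' \<and> finite (verts X')"
proof -
  interpret isoloc X Y \<phi> \<psi> using assms(1,2,4) by unfold_locales
  let ?Z = "move_O Y v n p"
  have t: "move_O_ok X (\<phi>i v) n (p \<circ> \<psi>)" "iso_via (move_O X (\<phi>i v) n (p \<circ> \<psi>)) ?Z (map_prod \<phi> id) (map_prod \<psi> id)"
    using transport_O[OF assms(6)] by auto
  have z: "wf_graph ?Z" "finite (verts ?Z)" "|edges ?Z| \<le>o |UNIV::'t set|"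
    using move_O_wf[OF assms(4,6)] move_O_finite[OF assms(5)] card_move_O[OF assms(7,8)] by auto
  obtain Z' :: "(nat,'t) graph" and \<phi>' \<psi>' where z': "iso_via Z' ?Z \<phi>' \<psi>'" "wf_graph Z'" "finite (verts Z')"
    using embed_nat[OF z] by blast
  have "graph_iso (move_O X (\<phi>i v) n (p \<circ> \<psi>)) Z'"
    using t(2) z'(1) z'(2) graph_iso_sym graph_iso_trans iso_via_graph_iso by metis
  then have "move_step X Z'" unfolding move_step_def using t(1) assms(2,3) z'(2,3) by blast
  then show ?thesis using z' by blast
qed

lemma step_I:
  fixes X :: "(nat,'t) graph"
  assumes "iso_via X Y \<phi> \<psi>" "wf_graph X" "finite (verts X)" "wf_graph Y" "finite (verts Y)"
    "move_I_ok Y v n p" "infinite (UNIV::'t set)" "|edges Y| \<le>o |UNIV::'t set|"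
  shows "\<exists>(X'::(nat,'t) graph) \<phi>' \<psi>'. move_step X X' \<and> iso_via X' (move_I Y v n p) \<phi>' \<psi>' \<and> wf_graph X' \<and> finite (verts X')"
proof -
  interpret isoloc X Y \<phi> \<psi> using assms(1,2,4) by unfold_locales
  let ?Z = "move_I Y v n p"
  have t: "move_I_ok X (\<phi>i v) n (p \<circ> \<psi>)" "iso_via (move_I X (\<phi>i v) n (p \<circ> \<psi>)) ?Z (map_prod \<phi> id) (map_prod \<psi> id)"
    using transport_I[OF assms(6)] by auto
  have z: "wf_graph ?Z" "finite (verts ?Z)" "|edges ?Z| \<le>o |UNIV::'t set|"
    using move_I_wf[OF assms(4,6)] move_I_finite[OF assms(5)] card_move_I[OF assms(7,8)] by auto
  obtain Z' :: "(nat,'t) graph" and \<phi>' \<psi>' where z': "iso_via Z' ?Z \<phi>' \<psi>'" "wf_graph Z'" "finite (verts Z')"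
    using embed_nat[OF z] by blast
  have "graph_iso (move_I X (\<phi>i v) n (p \<circ> \<psi>)) Z'"
    using t(2) z'(1) z'(2) graph_iso_sym graph_iso_trans iso_via_graph_iso by metis
  then have "move_step X Z'" unfolding move_step_def using t(1) assms(2,3) z'(2,3) by blast
  then show ?thesis using z' by blast
qed

lemma step_R:
  fixes X :: "(nat,'t) graph"
  assumes "iso_via X Y \<phi> \<psi>" "wf_graph X" "finite (verts X)" "wf_graph Y" "finite (verts Y)"
    "move_R_ok Y u f v" "infinite (UNIV::'t set)" "|edges Y| \<le>o |UNIV::'t set|"
  shows "\<exists>(X'::(nat,'t) graph) \<phi>' \<psi>'. move_step X X' \<and> iso_via X' (move_R Y u f v) \<phi>' \<psi>' \<and> wf_graph X' \<and> finite (verts X')"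
proof -
  interpret isoloc X Y \<phi> \<psi> using assms(1,2,4) by unfold_locales
  let ?Z = "move_R Y u f v"
  have t: "move_R_ok X (\<phi>i u) (\<psi>i f) (\<phi>i v)" "iso_via (move_R X (\<phi>i u) (\<psi>i f) (\<phi>i v)) ?Z \<phi> (map_sum \<psi> \<psi>)"
    using transport_R[OF assms(6)] by auto
  have z: "wf_graph ?Z" "finite (verts ?Z)" "|edges ?Z| \<le>o |UNIV::'t set|"
    using move_R_wf[OF assms(4,6)] move_R_finite[OF assms(5)] card_move_R[OF assms(7,8)] by auto
  obtain Z' :: "(nat,'t) graph" and \<phi>' \<psi>' where z': "iso_via Z' ?Z \<phi>' \<psi>'" "wf_graph Z'" "finite (verts Z')"
    using embed_nat[OF z] by blast
  have "graph_iso (move_R X (\<phi>i u) (\<psi>i f) (\<phi>i v)) Z'"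
    using t(2) z'(1) z'(2) graph_iso_sym graph_iso_trans iso_via_graph_iso by metis
  then have "move_step X Z'" unfolding move_step_def using t(1) assms(2,3) z'(2,3) by blast
  then show ?thesis using z' by blast
qed

section \<open>The chain O, I, R\<close>

definition "nO Y b f = (if out_edges Y b \<subseteq> {f} then 1 else 2::nat)"
definition "pO f = (\<lambda>e. if e = f then 1 else 2::nat)"
definition "Y1 Y b f = move_O Y b (nO Y b f) (pO f)"
definition "ap a b = (if a = b then (b,2) else (a,0::nat))"
definition "nI Y a b f = (if \<exists>e\<in>in_edges (Y1 Y b f) (b,1). src (Y1 Y b f) e \<noteq> ap a b then 2 else 1::nat)"
definition "pI Y a b f = (\<lambda>e. if src (Y1 Y b f) e = ap a b then 1 else 2::nat)"
definition "Y2 Y a b f = move_I (Y1 Y b f) (b,1) (nI Y a b f) (pI Y a b f)"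
definition "Kg Y a b f = move_R (Y2 Y a b f) ((b,1),1) ((f,0),1) (ap a b, 0)"

locale chainloc =
  fixes Y :: "('a,'b) graph" and a b :: 'a and f :: 'b
  assumes wf: "wf_graph Y" and fin: "finite (verts Y)" and av: "a \<in> verts Y" and bv: "b \<in> verts Y"
    and fe: "f \<in> edges Y" and sf: "src Y f = b" and rf: "rng Y f \<noteq> b"
    and inf: "infinite {e\<in>edges Y. src Y e = a \<and> rng Y e = b}"
begin

lemma p0: "\<exists>p0. p0 \<in> edges Y \<and> src Y p0 = a \<and> rng Y p0 = b"
  using inf not_finite_existsD by fastforce

lemma cv: "rng Y f \<in> verts Y" using wf fe unfolding wf_graph_def by auto

lemma ok1: "move_O_ok Y b (nO Y b f) (pO f)"
proof -
  have fo: "f \<in> out_edges Y b" using fe sf unfolding out_edges_def by auto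
  have part: "is_partition (out_edges Y b) (nO Y b f) (pO f)"
    unfolding is_partition_def
  proof (intro conjI ballI)
    show "1 \<le> nO Y b f" unfolding nO_def by auto
  next
    fix e assume "e \<in> out_edges Y b" then show "pO f e \<in> {1..nO Y b f}" unfolding nO_def pO_def by auto
  next
    fix i assume i: "i \<in> {1..nO Y b f}"
    show "{e \<in> out_edges Y b. pO f e = i} \<noteq> {}"
    proof (cases "i = 1")
      case True then show ?thesis using fo unfolding pO_def by auto
    next
      case False then have "i = 2" "nO Y b f = 2" using i unfolding nO_def by (auto split: if_splits)
      then obtain e where "e \<in> out_edges Y b" "e \<noteq> f" unfolding nO_def by (auto split: if_splits)
      then show ?thesis using \<open>i = 2\<close> unfolding pO_def by auto
    qed
  qed
  have "{i \<in> {1..nO Y b f}. infinite {e \<in> out_edges Y b. pO f e = i}} \<subseteq> {2}"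
  proof
    fix i assume i: "i \<in> {i \<in> {1..nO Y b f}. infinite {e \<in> out_edges Y b. pO f e = i}}"
    have "i \<le> 2" using i unfolding nO_def by (auto split: if_splits)
    moreover have "i \<noteq> 1"
    proof
      assume "i = 1"
      then have "{e \<in> out_edges Y b. pO f e = i} \<subseteq> {f}" unfolding pO_def by (auto split: if_splits)
      then show False using i finite_subset by blast
    qed
    ultimately show "i \<in> {2}" using i by auto
  qed
  then have "card {i \<in> {1..nO Y b f}. infinite {e \<in> out_edges Y b. pO f e = i}} \<le> card {2::nat}"
    by (intro card_mono) auto
  then show ?thesis using part bv fo unfolding move_O_ok_def is_sink_def by auto
qed

lemma out1: "out_edges (Y1 Y b f) (b,1) = {(f,0)}"
proof -
  have "x \<in> out_edges (Y1 Y b f) (b,1) \<longleftrightarrow> x = (f,0)" for x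
  proof (cases x)
    case (Pair e i)
    show ?thesis unfolding Pair out_edges_def Y1_def using fe sf rf
      by (auto simp: move_O_simps pO_def split: if_splits)
  qed
  then show ?thesis by auto
qed

lemma apne: "ap a b \<noteq> (b,1)" unfolding ap_def by auto

lemma nO2: "a = b \<Longrightarrow> nO Y b f = 2"
proof -
  assume ab: "a = b"
  obtain p0 where p: "p0 \<in> edges Y" "src Y p0 = a" "rng Y p0 = b" using p0 by blast
  have "p0 \<noteq> f" using p rf by auto
  then show ?thesis using p ab unfolding nO_def out_edges_def by auto
qed

lemma apv: "ap a b \<in> verts (Y1 Y b f)"
  using av nO2 unfolding Y1_def ap_def by (auto simp: move_O_simps)

lemma ok2: "move_I_ok (Y1 Y b f) (b,1) (nI Y a b f) (pI Y a b f)"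
proof -
  obtain p0 where p: "p0 \<in> edges Y" "src Y p0 = a" "rng Y p0 = b" using p0 by blast
  have pf: "p0 \<noteq> f" using p rf by auto
  have n1: "1 \<le> nO Y b f" unfolding nO_def by auto
  have pin: "(p0,1) \<in> in_edges (Y1 Y b f) (b,1)"
    unfolding in_edges_def Y1_def using p n1 by (auto simp: move_O_simps)
  have psrc: "src (Y1 Y b f) (p0,1) = ap a b"
    unfolding Y1_def ap_def using p pf by (auto simp: move_O_simps pO_def)
  have v: "(b,1) \<in> verts (Y1 Y b f)" unfolding Y1_def using bv n1 by (auto simp: move_O_simps)
  have reg: "is_regular (Y1 Y b f) (b,1)" unfolding is_regular_def using out1 by simp
  have part: "is_partition (in_edges (Y1 Y b f) (b,1)) (nI Y a b f) (pI Y a b f)"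
    unfolding is_partition_def
  proof (intro conjI ballI)
    show "1 \<le> nI Y a b f" unfolding nI_def by auto
  next
    fix e assume "e \<in> in_edges (Y1 Y b f) (b,1)"
    then show "pI Y a b f e \<in> {1..nI Y a b f}" unfolding pI_def nI_def by auto
  next
    fix i assume i: "i \<in> {1..nI Y a b f}"
    show "{e \<in> in_edges (Y1 Y b f) (b, 1). pI Y a b f e = i} \<noteq> {}"
    proof (cases "i = 1")
      case True then show ?thesis using pin psrc unfolding pI_def by auto
    next
      case False then have "i = 2" "nI Y a b f = 2" using i unfolding nI_def by (auto split: if_splits)
      then show ?thesis unfolding pI_def nI_def by (auto split: if_splits)
    qed
  qed
  show ?thesis unfolding move_I_ok_def is_source_def using v reg part pin by auto
qed

lemma nI1: "1 \<le> nI Y a b f" unfolding nI_def by auto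

lemma ok3: "move_R_ok (Y2 Y a b f) ((b,1),1) ((f,0),1) (ap a b, 0)"
proof -
  have "(f,0) \<in> out_edges (Y1 Y b f) (b,1)" using out1 by simp
  then have fe1a: "(f,0) \<in> edges (Y1 Y b f)" "src (Y1 Y b f) (f,0) = (b,1)" unfolding out_edges_def by auto
  have fe1b: "rng (Y1 Y b f) (f,0) = (rng Y f, 0)" unfolding Y1_def move_O_simps using rf by simp
  note fe1 = fe1a fe1b
  have uv: "((b,1),1) \<in> verts (Y2 Y a b f)" unfolding Y2_def move_I_simps using nI1 by simp
  have vv: "(ap a b, 0) \<in> verts (Y2 Y a b f)" unfolding Y2_def move_I_simps using apv apne by simp
  have out2: "out_edges (Y2 Y a b f) ((b,1),1) = {((f,0),1)}"
  proof -
    have "x \<in> out_edges (Y2 Y a b f) ((b,1),1) \<longleftrightarrow> x = ((f,0),1)" for x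
    proof (cases x)
      case (Pair e j)
      have "e \<in> edges (Y1 Y b f) \<and> src (Y1 Y b f) e = (b,1) \<longleftrightarrow> e = (f,0)"
        using out1 unfolding out_edges_def by blast
      then show ?thesis unfolding Pair out_edges_def Y2_def using nI1
        by (auto simp: move_I_simps)
    qed
    then show ?thesis by auto
  qed
  have rf2: "rng (Y2 Y a b f) ((f,0),1) \<noteq> ((b,1),1)"
    unfolding Y2_def move_I_simps using fe1 rf by simp
  have ie: "\<forall>e\<in>in_edges (Y2 Y a b f) ((b,1),1). src (Y2 Y a b f) e = (ap a b, 0)"
  proof
    fix x assume x: "x \<in> in_edges (Y2 Y a b f) ((b,1),1)"
    obtain e j where xe: "x = (e,j)" by (cases x)
    have "rng (Y1 Y b f) e = (b,1) \<and> pI Y a b f e = 1"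
      using x unfolding xe in_edges_def Y2_def by (auto simp: move_I_simps split: if_splits)
    then have "src (Y1 Y b f) e = ap a b" unfolding pI_def by (auto split: if_splits)
    then show "src (Y2 Y a b f) x = (ap a b, 0)" unfolding xe Y2_def using apne by (auto simp: move_I_simps)
  qed
  show ?thesis unfolding move_R_ok_def is_regular_def using uv vv out2 rf2 ie by auto
qed

lemma wf1: "wf_graph (Y1 Y b f)" "finite (verts (Y1 Y b f))"
  unfolding Y1_def using move_O_wf[OF wf ok1] move_O_finite[OF fin] by auto
lemma wf2: "wf_graph (Y2 Y a b f)" "finite (verts (Y2 Y a b f))"
  unfolding Y2_def using move_I_wf[OF wf1(1) ok2] move_I_finite[OF wf1(2)] by auto

lemma chain:
  fixes X :: "(nat,'t) graph"
  assumes "iso_via X Y \<phi> \<psi>" "wf_graph X" "finite (verts X)" "infinite (UNIV::'t set)" "|edges Y| \<le>o |UNIV::'t set|"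
  shows "\<exists>(K::(nat,'t) graph) \<phi>' \<psi>'. equivclp move_step X K \<and> iso_via K (Kg Y a b f) \<phi>' \<psi>' \<and> wf_graph K \<and> finite (verts K)"
proof -
  obtain X1 :: "(nat,'t) graph" and \<phi>1 \<psi>1 where 1: "move_step X X1" "iso_via X1 (Y1 Y b f) \<phi>1 \<psi>1" "wf_graph X1" "finite (verts X1)"
    using step_O[OF assms(1-3) wf fin ok1 assms(4,5)] unfolding Y1_def by blast
  have c1: "|edges (Y1 Y b f)| \<le>o |UNIV::'t set|" unfolding Y1_def using card_move_O[OF assms(4,5)] .
  obtain X2 :: "(nat,'t) graph" and \<phi>2 \<psi>2 where 2: "move_step X1 X2" "iso_via X2 (Y2 Y a b f) \<phi>2 \<psi>2" "wf_graph X2" "finite (verts X2)"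
    using step_I[OF 1(2-4) wf1 ok2 assms(4) c1] unfolding Y2_def by blast
  have c2: "|edges (Y2 Y a b f)| \<le>o |UNIV::'t set|" unfolding Y2_def using card_move_I[OF assms(4) c1] .
  obtain X3 :: "(nat,'t) graph" and \<phi>3 \<psi>3 where 3: "move_step X2 X3" "iso_via X3 (Kg Y a b f) \<phi>3 \<psi>3" "wf_graph X3" "finite (verts X3)"
    using step_R[OF 2(2-4) wf2 ok3 assms(4) c2] unfolding Kg_def by blast
  have "equivclp move_step X X3" using 1(1) 2(1) 3(1)
    by (meson r_into_equivclp converse_rtranclp_into_rtranclp equivclp_trans)
  then show ?thesis using 3 by blast
qed

end


lemma addS_simps:
  "Inl e \<in> edges (addS G a b S) \<longleftrightarrow> e \<in> edges G" "Inr m \<in> edges (addS G a b S) \<longleftrightarrow> m \<in> S"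
  "src (addS G a b S) (Inl e) = src G e" "src (addS G a b S) (Inr m) = a"
  "rng (addS G a b S) (Inl e) = rng G e" "rng (addS G a b S) (Inr m) = b"
  unfolding addS_def by auto

lemma src_fun:
  "src (move_R G u f v) = (\<lambda>x. case x of Inl e \<Rightarrow> src G e | Inr e \<Rightarrow> v)"
  "src (move_I G v n p) = (\<lambda>(e,i). if src G e = v then (v,i) else (src G e, 0))"
  "src (move_O G v n p) = (\<lambda>(e,i). if src G e = v then (v, p e) else (src G e, 0))"
  "src (addS G a b S) = (\<lambda>x. case x of Inl e \<Rightarrow> src G e | Inr m \<Rightarrow> a)"
  unfolding move_R_def move_I_def move_O_def addS_def by simp_all

lemma rng_fun:
  "rng (move_R G u f v) = (\<lambda>x. case x of Inl e \<Rightarrow> rng G e | Inr e \<Rightarrow> rng G f)"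
  "rng (move_I G v n p) = (\<lambda>(e,i). if rng G e = v then (v, p e) else (rng G e, 0))"
  "rng (move_O G v n p) = (\<lambda>(e,i). if rng G e = v then (v,i) else (rng G e, 0))"
  "rng (addS G a b S) = (\<lambda>x. case x of Inl e \<Rightarrow> rng G e | Inr m \<Rightarrow> b)"
  unfolding move_R_def move_I_def move_O_def addS_def by simp_all

lemma four_cases:
  obtains e i j where "x = Inl ((Inl e,i),j)" | e i j where "x = Inr ((Inl e,i),j)"
    | m i j where "x = Inl ((Inr m,i),j)" | m i j where "x = Inr ((Inr m,i),j)"
proof (cases x)
  case (Inl z)
  obtain y j where y: "z = (y,j)" by (cases z)
  obtain d i where d: "y = (d,i)" by (cases y)
  show ?thesis using that Inl y d by (cases d) auto
next
  case (Inr z)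
  obtain y j where y: "z = (y,j)" by (cases z)
  obtain d i where d: "y = (d,i)" by (cases y)
  show ?thesis using that Inr y d by (cases d) auto
qed

lemma inf_image: "inj_on g A \<Longrightarrow> infinite A \<Longrightarrow> g ` A \<subseteq> B \<Longrightarrow> infinite B"
  using finite_imageD finite_subset by blast

lemma addS_finite: "finite (verts G) \<Longrightarrow> finite (verts (addS G a b S))" by simp

lemma absorb_add:
  assumes "wf_graph X" "a \<in> verts X" "c \<in> verts X" "infinite {e\<in>edges X. src X e = a \<and> rng X e = c}"
  shows "graph_iso (addS X a c UNIV) X"
proof -
  let ?Z = "addS X a c {}" and ?Z' = "addS X a c UNIV"
  have "{e\<in>edges ?Z. src ?Z e = a \<and> rng ?Z e = c} = Inl ` {e\<in>edges X. src X e = a \<and> rng X e = c}"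
    unfolding addS_def by auto
  then have inf: "infinite {e\<in>edges ?Z. src ?Z e = a \<and> rng ?Z e = c}"
    using assms(4) finite_imageD[of Inl] by (auto simp: inj_on_def)
  have "\<exists>\<psi>. iso_via ?Z' ?Z id \<psi>"
    by (rule absorb[where h=Inr and x=a and y=c]) (use inf in \<open>auto simp: addS_def\<close>)
  then have "graph_iso ?Z' ?Z" using iso_via_graph_iso by blast
  moreover have "graph_iso ?Z X"
    using graph_iso_sym[OF assms(1) iso_via_graph_iso[OF addS_empty_iso]] .
  ultimately show ?thesis using graph_iso_trans by blast
qed

lemma embed_id:
  fixes Z :: "(nat,'b) graph"
  assumes "wf_graph Z" "finite (verts Z)" "|edges Z| \<le>o |UNIV :: 't set|"
  shows "\<exists>(Z'::(nat,'t) graph) \<psi>. iso_via Z Z' id \<psi> \<and> wf_graph Z' \<and> finite (verts Z')"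
  using embed_exists[OF assms(1,2) _ assms(3), of id] by simp

lemma path_iso:
  assumes "iso_via X Z \<phi> \<psi>" "is_path X \<beta>"
  shows "is_path Z (map \<psi> \<beta>)"
proof -
  have b: "bij_betw \<psi> (edges X) (edges Z)" and c: "\<forall>e\<in>edges X. src Z (\<psi> e) = \<phi> (src X e) \<and> rng Z (\<psi> e) = \<phi> (rng X e)"
    using assms(1) unfolding iso_via_def by auto
  have s: "set \<beta> \<subseteq> edges X" "\<beta> \<noteq> []" using assms(2) unfolding is_path_def by auto
  show ?thesis unfolding is_path_def
  proof (intro conjI allI impI)
    show "map \<psi> \<beta> \<noteq> []" using s by simp
    show "set (map \<psi> \<beta>) \<subseteq> edges Z" using s b by (auto simp: bij_betw_def)
  next
    fix i assume i: "Suc i < length (map \<psi> \<beta>)"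
    then have "\<beta> ! i \<in> edges X" "\<beta> ! Suc i \<in> edges X" using s by auto
    then show "rng Z (map \<psi> \<beta> ! i) = src Z (map \<psi> \<beta> ! Suc i)"
      using c assms(2) i unfolding is_path_def by auto
  qed
qed

section \<open>Comparison of the two chains\<close>

locale cmploc =
  fixes X :: "(nat,'t) graph" and a b :: nat and f :: 't
  assumes wf: "wf_graph X" and fin: "finite (verts X)"
    and fe: "f \<in> edges X" and sf: "src X f = b" and rf: "rng X f \<noteq> b"
    and inf: "infinite {e\<in>edges X. src X e = a \<and> rng X e = b}"
begin

definition "c = rng X f"

lemma av: "a \<in> verts X" and bv: "b \<in> verts X" and cv: "c \<in> verts X"
proof -
  obtain p where "p \<in> edges X" "src X p = a" "rng X p = b" using inf not_finite_existsD by fastforce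
  then show "a \<in> verts X" "b \<in> verts X" using wf unfolding wf_graph_def by auto
  show "c \<in> verts X" using wf fe unfolding wf_graph_def c_def by auto
qed

lemma cb: "c \<noteq> b" using rf c_def by simp

abbreviation "YS S \<equiv> addS X a c S"

lemma ch: "chainloc (YS S) a b (Inl f)"
proof
  show "wf_graph (YS S)" using addS_wf[OF wf av cv] .
  show "finite (verts (YS S))" using fin by simp
  show "a \<in> verts (YS S)" "b \<in> verts (YS S)" using av bv by auto
  show "Inl f \<in> edges (YS S)" "src (YS S) (Inl f) = b" "rng (YS S) (Inl f) \<noteq> b" using fe sf rf by (auto simp: addS_simps)
  have "Inl ` {e\<in>edges X. src X e = a \<and> rng X e = b} \<subseteq> {e \<in> edges (YS S). src (YS S) e = a \<and> rng (YS S) e = b}"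
    by (auto simp: addS_simps)
  then show "infinite {e \<in> edges (YS S). src (YS S) e = a \<and> rng (YS S) e = b}"
    using inf_image[of Inl, OF _ inf] by (simp add: inj_on_def)
qed

lemma chX: "chainloc X a b f"
  by (unfold_locales) (use wf fin av bv fe sf rf inf in auto)

lemma nO_YS: "nO (YS S) b (Inl f) = nO X b f"
proof (cases "a = b")
  case True
  then show ?thesis using chainloc.nO2[OF ch] chainloc.nO2[OF chX] by simp
next
  case False
  have "out_edges (YS S) b = Inl ` out_edges X b"
    unfolding out_edges_def addS_def using False by auto
  then show ?thesis unfolding nO_def by auto
qed

lemma nI_YS: "nI (YS S) a b (Inl f) = nI X a b f"
proof -
  have "(\<exists>e\<in>in_edges (Y1 (YS S) b (Inl f)) (b,1). src (Y1 (YS S) b (Inl f)) e \<noteq> ap a b) \<longleftrightarrow>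
        (\<exists>e\<in>in_edges (Y1 X b f) (b,1). src (Y1 X b f) e \<noteq> ap a b)"
  proof
    assume "\<exists>e\<in>in_edges (Y1 (YS S) b (Inl f)) (b,1). src (Y1 (YS S) b (Inl f)) e \<noteq> ap a b"
    then obtain d i where d: "(d,i) \<in> in_edges (Y1 (YS S) b (Inl f)) (b,1)" "src (Y1 (YS S) b (Inl f)) (d,i) \<noteq> ap a b"
      by auto
    show "\<exists>e\<in>in_edges (Y1 X b f) (b,1). src (Y1 X b f) e \<noteq> ap a b"
    proof (cases d)
      case (Inl e)
      then show ?thesis using d unfolding in_edges_def Y1_def nO_YS
        by (intro bexI[of _ "(e,i)"]) (auto simp: move_O_simps addS_simps pO_def)
    next
      case (Inr m)
      then show ?thesis using d cb unfolding in_edges_def Y1_def by (auto simp: move_O_simps addS_simps)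
    qed
  next
    assume "\<exists>e\<in>in_edges (Y1 X b f) (b,1). src (Y1 X b f) e \<noteq> ap a b"
    then obtain e i where d: "(e,i) \<in> in_edges (Y1 X b f) (b,1)" "src (Y1 X b f) (e,i) \<noteq> ap a b"
      by auto
    then show "\<exists>e\<in>in_edges (Y1 (YS S) b (Inl f)) (b,1). src (Y1 (YS S) b (Inl f)) e \<noteq> ap a b"
      unfolding in_edges_def Y1_def nO_YS
      by (intro bexI[of _ "(Inl e,i)"]) (auto simp: move_O_simps addS_simps pO_def)
  qed
  then show ?thesis unfolding nI_def by simp
qed

abbreviation "KS S \<equiv> Kg (YS S) a b (Inl f)"

lemma KS_verts: "verts (KS S) = verts (KS S')"
  unfolding Kg_def Y2_def Y1_def nI_YS nO_YS by (simp add: move_R_def move_I_def move_O_def)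

lemma KS_src: "src (KS S) = src (KS S')"
  unfolding Kg_def Y2_def Y1_def pI_def by (simp only: src_fun rng_fun)

lemma KS_rng: "rng (KS S) = rng (KS S')"
  unfolding Kg_def Y2_def Y1_def pI_def by (simp only: src_fun rng_fun)

definition "hh m = Inl ((Inr m, 0), 0)"

lemma KS_edges_Inl_Inl: "Inl ((Inl e, i), j) \<in> edges (KS S) \<longleftrightarrow> Inl ((Inl e, i), j) \<in> edges (KS S')"
  unfolding Kg_def Y2_def Y1_def pI_def nI_YS nO_YS
  by (simp add: move_R_simps move_I_simps move_O_simps addS_simps pO_def)

lemma KS_edges_Inr_Inl: "Inr ((Inl e, i), j) \<in> edges (KS S) \<longleftrightarrow> Inr ((Inl e, i), j) \<in> edges (KS S')"
  unfolding Kg_def Y2_def Y1_def pI_def nI_YS nO_YS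
  by (simp add: move_R_simps move_I_simps move_O_simps addS_simps pO_def)

lemma apb: "ap a b \<noteq> (b,1)" unfolding ap_def by auto

lemma KS_edges_Inl_Inr: "Inl ((Inr m, i), j) \<in> edges (KS S) \<longleftrightarrow> m \<in> S \<and> i = 0 \<and> j = 0"
proof -
  have s: "src (Y1 (YS S) b (Inl f)) (Inr m, 0) = ap a b"
    unfolding Y1_def ap_def by (auto simp: move_O_simps addS_simps pO_def)
  show ?thesis
    unfolding Kg_def Y2_def using s apb cb
    by (auto simp: move_R_simps move_I_simps Y1_def move_O_simps addS_simps)
qed

lemma KS_edges_Inr_Inr: "Inr ((Inr m, i), j) \<notin> edges (KS S)"
  unfolding Kg_def Y2_def Y1_def using cb
  by (auto simp: move_R_simps move_I_simps move_O_simps addS_simps split: if_splits)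

lemma KS_edges: "edges (KS UNIV) = edges (KS {}) \<union> range hh"
proof (intro equalityI subsetI)
  fix x assume x: "x \<in> edges (KS UNIV)"
  show "x \<in> edges (KS {}) \<union> range hh"
  proof (cases x rule: four_cases)
    case (1 e i j) then show ?thesis using x KS_edges_Inl_Inl by blast
  next
    case (2 e i j) then show ?thesis using x KS_edges_Inr_Inl by blast
  next
    case (3 m i j) then show ?thesis using x KS_edges_Inl_Inr unfolding hh_def by blast
  next
    case (4 m i j) then show ?thesis using x KS_edges_Inr_Inr by blast
  qed
next
  fix x assume x: "x \<in> edges (KS {}) \<union> range hh"
  show "x \<in> edges (KS UNIV)"
  proof (cases x rule: four_cases)
    case (1 e i j) then show ?thesis using x KS_edges_Inl_Inl[of e i j "{}" UNIV] KS_edges_Inl_Inr unfolding hh_def by auto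
  next
    case (2 e i j) then show ?thesis using x KS_edges_Inr_Inl[of e i j "{}" UNIV] unfolding hh_def by auto
  next
    case (3 m i j) then show ?thesis using x KS_edges_Inl_Inr unfolding hh_def by auto
  next
    case (4 m i j) then show ?thesis using x KS_edges_Inr_Inr unfolding hh_def by auto
  qed
qed

lemma hh_src: "src (KS S) (hh m) = (ap a b, 0)" and hh_rng: "rng (KS S) (hh m) = ((c,0),0)"
proof -
  have s: "src (Y1 (YS S) b (Inl f)) (Inr m, 0) = ap a b"
    unfolding Y1_def ap_def by (auto simp: move_O_simps addS_simps pO_def)
  show "src (KS S) (hh m) = (ap a b, 0)"
    unfolding Kg_def Y2_def hh_def using s apb by (simp add: move_R_simps move_I_simps)
  show "rng (KS S) (hh m) = ((c,0),0)"
    unfolding Kg_def Y2_def hh_def Y1_def using cb by (simp add: move_R_simps move_I_simps move_O_simps addS_simps c_def)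
qed

lemma KS_inf: "infinite {e\<in>edges (KS {}). src (KS {}) e = (ap a b, 0) \<and> rng (KS {}) e = ((c,0),0)}"
proof -
  let ?P = "{e\<in>edges X. src X e = a \<and> rng X e = b}"
  have "(\<lambda>p. Inr ((Inl p,1),0)) ` ?P \<subseteq> {e\<in>edges (KS {}). src (KS {}) e = (ap a b, 0) \<and> rng (KS {}) e = ((c,0),0)}"
  proof
    fix x :: "((('t+nat)\<times>nat)\<times>nat) + ((('t+nat)\<times>nat)\<times>nat)"
    assume "x \<in> (\<lambda>p. Inr ((Inl p,1),0)) ` ?P"
    then obtain p where p: "x = Inr ((Inl p,1),0)" "p \<in> edges X" "src X p = a" "rng X p = b" by auto
    have pf: "p \<noteq> f" using p rf by auto
    have n: "1 \<le> nO (YS {}) b (Inl f)" "1 \<le> nI (YS {}) a b (Inl f)" unfolding nO_def nI_def by auto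
    have s1: "src (Y1 (YS {}) b (Inl f)) (Inl p, 1) = ap a b"
      unfolding Y1_def ap_def using p pf by (auto simp: move_O_simps addS_simps pO_def)
    have e1: "(Inl p, 1) \<in> edges (Y1 (YS {}) b (Inl f))" "rng (Y1 (YS {}) b (Inl f)) (Inl p, 1) = (b,1)"
      unfolding Y1_def using p n by (auto simp: move_O_simps addS_simps)
    have "((Inl p,1),0) \<in> edges (Y2 (YS {}) a b (Inl f))" "rng (Y2 (YS {}) a b (Inl f)) ((Inl p,1),0) = ((b,1),1)"
      unfolding Y2_def using e1 s1 apb by (auto simp: move_I_simps pI_def)
    moreover have "rng (Y2 (YS {}) a b (Inl f)) ((Inl f,0),1) = ((c,0),0)"
      unfolding Y2_def Y1_def using cb fe by (simp add: move_I_simps move_O_simps addS_simps c_def)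
    ultimately show "x \<in> {e\<in>edges (KS {}). src (KS {}) e = (ap a b, 0) \<and> rng (KS {}) e = ((c,0),0)}"
      unfolding p(1) Kg_def by (simp add: move_R_simps)
  qed
  moreover have "inj_on (\<lambda>p. Inr ((Inl p,1),0) :: ((('t+nat)\<times>nat)\<times>nat) + ((('t+nat)\<times>nat)\<times>nat)) ?P"
    by (auto simp: inj_on_def)
  ultimately show ?thesis using inf_image inf by blast
qed

lemma KS_iso: "\<exists>\<psi>. iso_via (KS UNIV) (KS {}) id \<psi>"
  by (rule absorb[where h=hh and x="(ap a b, 0)" and y="((c,0),0)"])
     (use KS_verts KS_src KS_rng KS_edges hh_src hh_rng KS_inf in auto)

lemma KS_wf: "wf_graph (KS S)"
  unfolding Kg_def using move_R_wf[OF chainloc.wf2(1)[OF ch] chainloc.ok3[OF ch]] .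

end


lemma one_edge:
  fixes X X' :: "(nat,'t) graph"
  assumes t: "infinite (UNIV::'t set)" and wf: "wf_graph X" and fin: "finite (verts X)"
    and fe: "f \<in> edges X" and sf: "src X f = b"
    and inf: "infinite {e\<in>edges X. src X e = a \<and> rng X e = b}"
    and iso: "graph_iso (addS X a (rng X f) UNIV) X'" and wf': "wf_graph X'" and fin': "finite (verts X')"
  shows "equivclp move_step X X'"
proof -
  obtain p where p: "p \<in> edges X" "src X p = a" "rng X p = b" using inf not_finite_existsD by fastforce
  have av: "a \<in> verts X" and bv: "b \<in> verts X" using wf p unfolding wf_graph_def by auto
  have cv: "rng X f \<in> verts X" using wf fe unfolding wf_graph_def by auto
  have ne: "edges X \<noteq> {}" using fe by auto
  show ?thesis
  proof (cases "rng X f = b")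
    case True
    have i2: "graph_iso (addS X a b UNIV) X'" using iso True by simp
    have "graph_iso X (addS X a b UNIV)" using graph_iso_sym[OF addS_wf[OF wf av bv] absorb_add[OF wf av bv inf]] .
    then have "graph_iso X X'" using graph_iso_trans[OF _ i2] by blast
    then show ?thesis using iso_equivclp[OF wf fin wf' fin' ne] by blast
  next
    case False
    interpret cmploc X a b f using wf fin fe sf False inf by unfold_locales
    have cards: "|edges (YS S)| \<le>o |UNIV::'t set|" for S using card_addS[OF t card_UNIV_t] .
    obtain K1 :: "(nat,'t) graph" and \<phi>1 \<psi>1 where K1: "equivclp move_step X K1" "iso_via K1 (KS {}) \<phi>1 \<psi>1"
      "wf_graph K1" "finite (verts K1)"
      using chainloc.chain[OF ch addS_empty_iso wf fin t cards] by blast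
    obtain \<phi> \<psi> where i: "iso_via (YS UNIV) X' \<phi> \<psi>" using iso unfolding graph_iso_iff c_def by blast
    have i': "iso_via X' (YS UNIV) (inv_into (verts (YS UNIV)) \<phi>) (inv_into (edges (YS UNIV)) \<psi>)"
      using iso_via_inv[OF addS_wf[OF wf av cv] i] c_def by simp
    obtain K2 :: "(nat,'t) graph" and \<phi>2 \<psi>2 where K2: "equivclp move_step X' K2" "iso_via K2 (KS UNIV) \<phi>2 \<psi>2"
      "wf_graph K2" "finite (verts K2)"
      using chainloc.chain[OF ch i' wf' fin' t cards] by blast
    obtain \<psi> where "iso_via (KS UNIV) (KS {}) id \<psi>" using KS_iso by blast
    then have ga: "graph_iso (KS {}) (KS UNIV)" using graph_iso_sym[OF KS_wf iso_via_graph_iso] by blast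
    have gb: "graph_iso K1 (KS {})" using iso_via_graph_iso[OF K1(2)] .
    have gc: "graph_iso (KS UNIV) K2" using graph_iso_sym[OF K2(3) iso_via_graph_iso[OF K2(2)]] .
    have g: "graph_iso K1 K2" using graph_iso_trans[OF gb graph_iso_trans[OF ga gc]] .
    have "edges (KS {}) \<noteq> {}" using KS_inf by auto
    then have "edges K1 \<noteq> {}" using K1(2) unfolding iso_via_def bij_betw_def by auto
    then have "equivclp move_step K1 K2" using iso_equivclp[OF K1(3,4) K2(3,4) _ g] by blast
    then show ?thesis using K1(1) K2(1)
      by (meson equivclp_sym equivclp_trans)
  qed
qed

lemma path_snoc:
  assumes "is_path X (\<beta> @ [g])" "\<beta> \<noteq> []"
  shows "is_path X \<beta>" "g \<in> edges X" "rng X (last \<beta>) = src X g"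
proof -
  show "is_path X \<beta>" using assms unfolding is_path_def by (auto simp: nth_append)
  show "g \<in> edges X" using assms unfolding is_path_def by auto
  have n: "Suc (length \<beta> - 1) < length (\<beta> @ [g])" using assms(2) by simp
  have "rng X ((\<beta> @ [g]) ! (length \<beta> - 1)) = src X ((\<beta> @ [g]) ! Suc (length \<beta> - 1))"
    using assms(1) n unfolding is_path_def by blast
  then show "rng X (last \<beta>) = src X g" using assms(2)
    by (simp add: nth_append last_conv_nth)
qed

lemma addS_path: "is_path X \<beta> \<Longrightarrow> is_path (addS X a c S) (map Inl \<beta>)"
  unfolding is_path_def by (auto simp: addS_simps)

lemma path_induct:
  fixes X X' :: "(nat,'t) graph"
  assumes t: "infinite (UNIV::'t set)"
  shows "length \<gamma> = n \<Longrightarrow> is_path X \<gamma> \<Longrightarrow> wf_graph X \<Longrightarrow> finite (verts X) \<Longrightarrow>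
    infinite {e\<in>edges X. src X e = src X (hd \<gamma>) \<and> rng X e = rng X (hd \<gamma>)} \<Longrightarrow>
    graph_iso (addS X (src X (hd \<gamma>)) (rng X (last \<gamma>)) UNIV) X' \<Longrightarrow> wf_graph X' \<Longrightarrow> finite (verts X') \<Longrightarrow>
    equivclp move_step X X'"
proof (induction n arbitrary: \<gamma> X X')
  case 0
  then show ?case unfolding is_path_def by simp
next
  case (Suc n)
  have "\<gamma> \<noteq> []" using Suc.prems(1) by auto
  then obtain \<beta> g where bg: "\<gamma> = \<beta> @ [g]" using rev_exhaust by blast
  have ln: "length \<beta> = n" using Suc.prems(1) bg by simp
  note prems = Suc.prems(2-8)[unfolded bg]
  show ?case
  proof (cases "\<beta> = []")
    case True
    let ?a = "src X g" and ?c = "rng X g"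
    have g: "g \<in> edges X" using prems(1) unfolding is_path_def by auto
    have av: "?a \<in> verts X" and cv: "?c \<in> verts X" using g prems(2) unfolding wf_graph_def by auto
    have inf': "infinite {e\<in>edges X. src X e = ?a \<and> rng X e = ?c}" using prems(4) True by simp
    have i5: "graph_iso (addS X ?a ?c UNIV) X'" using prems(5) True by simp
    have "graph_iso X (addS X ?a ?c UNIV)"
      using graph_iso_sym[OF addS_wf[OF prems(2) av cv] absorb_add[OF prems(2) av cv inf']] .
    then have "graph_iso X X'" using graph_iso_trans[OF _ i5] by blast
    then show ?thesis using iso_equivclp[OF prems(2,3,6,7)] g by blast
  next
    case False
    note pth = path_snoc[OF prems(1) False]
    define a where "a = src X (hd \<beta>)"
    define xk where "xk = rng X (last \<beta>)"
    define y where "y = rng X g"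
    have hd: "hd (\<beta> @ [g]) = hd \<beta>" "last (\<beta> @ [g]) = g" using False by auto
    have wX: "wf_graph X" and fX: "finite (verts X)" using prems by auto
    have infX: "infinite {e\<in>edges X. src X e = a \<and> rng X e = rng X (hd \<beta>)}" using prems(4) hd a_def by simp
    have hdin: "hd \<beta> \<in> edges X" using pth(1) False unfolding is_path_def by (auto intro: hd_in_set)
    have lin: "last \<beta> \<in> edges X" using pth(1) False unfolding is_path_def by auto
    have av: "a \<in> verts X" using wX hdin a_def unfolding wf_graph_def by auto
    have xv: "xk \<in> verts X" using wX lin xk_def unfolding wf_graph_def by auto
    have yv: "y \<in> verts X" using wX pth(2) y_def unfolding wf_graph_def by auto
    have cardX: "|edges X| \<le>o |UNIV::'t set|" by (rule card_UNIV_t)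
    obtain X1 :: "(nat,'t) graph" and \<psi>1 where X1: "iso_via (addS X a xk UNIV) X1 id \<psi>1" "wf_graph X1" "finite (verts X1)"
      using embed_id[OF addS_wf[OF wX av xv] addS_finite[OF fX] card_addS[OF t cardX]] by blast
    have e01: "equivclp move_step X X1"
      using Suc.IH[OF ln pth(1) wX fX infX[unfolded a_def] _ X1(2,3)] X1(1) iso_via_graph_iso a_def xk_def by blast
    have v1: "verts X1 = verts X" using X1(1) unfolding iso_via_def bij_betw_def by simp
    have c1: "e \<in> edges (addS X a xk UNIV) \<Longrightarrow> src X1 (\<psi>1 e) = src (addS X a xk UNIV) e \<and> rng X1 (\<psi>1 e) = rng (addS X a xk UNIV) e" for e
      using X1(1) unfolding iso_via_def by simp
    have b1: "bij_betw \<psi>1 (edges (addS X a xk UNIV)) (edges X1)" using X1(1) unfolding iso_via_def by simp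
    have ax1: "a \<in> verts X1" "y \<in> verts X1" using av yv v1 by auto
    obtain X2 :: "(nat,'t) graph" and \<psi>2 where X2: "iso_via (addS X1 a y UNIV) X2 id \<psi>2" "wf_graph X2" "finite (verts X2)"
      using embed_id[OF addS_wf[OF X1(2) ax1] addS_finite[OF X1(3)] card_addS[OF t card_UNIV_t]] by blast
    have e12: "equivclp move_step X1 X2"
    proof (rule one_edge[OF t X1(2,3)])
      show "\<psi>1 (Inl g) \<in> edges X1" using b1 pth(2) by (auto simp: bij_betw_def addS_simps)
      show "src X1 (\<psi>1 (Inl g)) = xk" using c1[of "Inl g"] pth xk_def by (simp add: addS_simps)
      have "\<psi>1 ` Inr ` UNIV \<subseteq> {e \<in> edges X1. src X1 e = a \<and> rng X1 e = xk}"
        using c1 b1 by (auto simp: bij_betw_def addS_simps)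
      moreover have "inj_on \<psi>1 (Inr ` UNIV)" using b1 unfolding bij_betw_def
        by (rule inj_on_subset[OF conjunct1]) (auto simp: addS_def)
      moreover have "infinite (Inr ` (UNIV::nat set) :: ('t + nat) set)" by (simp add: finite_image_iff)
      ultimately show "infinite {e \<in> edges X1. src X1 e = a \<and> rng X1 e = xk}" using inf_image by blast
      have "rng X1 (\<psi>1 (Inl g)) = y" using c1[of "Inl g"] pth y_def by (simp add: addS_simps)
      then show "graph_iso (addS X1 a (rng X1 (\<psi>1 (Inl g))) UNIV) X2" using X2(1) iso_via_graph_iso by simp
    qed (use X2 in auto)
    obtain X3 :: "(nat,'t) graph" and \<psi>3 where X3: "iso_via (addS X a y UNIV) X3 id \<psi>3" "wf_graph X3" "finite (verts X3)"
      using embed_id[OF addS_wf[OF wX av yv] addS_finite[OF fX] card_addS[OF t cardX]] by blast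
    have v3: "verts X3 = verts X" using X3(1) unfolding iso_via_def bij_betw_def by simp
    have c3: "e \<in> edges (addS X a y UNIV) \<Longrightarrow> src X3 (\<psi>3 e) = src (addS X a y UNIV) e \<and> rng X3 (\<psi>3 e) = rng (addS X a y UNIV) e" for e
      using X3(1) unfolding iso_via_def by simp
    have b3: "bij_betw \<psi>3 (edges (addS X a y UNIV)) (edges X3)" using X3(1) unfolding iso_via_def by simp
    define \<beta>3 where "\<beta>3 = map \<psi>3 (map Inl \<beta>)"
    have p3: "is_path X3 \<beta>3" unfolding \<beta>3_def using path_iso[OF X3(1) addS_path[OF pth(1)]] .
    have h3: "hd \<beta>3 = \<psi>3 (Inl (hd \<beta>))" "last \<beta>3 = \<psi>3 (Inl (last \<beta>))" unfolding \<beta>3_def using False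
      by (auto simp: hd_map last_map)
    have s3: "src X3 (hd \<beta>3) = a" "rng X3 (hd \<beta>3) = rng X (hd \<beta>)" "rng X3 (last \<beta>3) = xk"
      using h3 c3[of "Inl (hd \<beta>)"] c3[of "Inl (last \<beta>)"] hdin lin a_def xk_def by (auto simp: addS_simps)
    have inf3: "infinite {e\<in>edges X3. src X3 e = src X3 (hd \<beta>3) \<and> rng X3 e = rng X3 (hd \<beta>3)}"
    proof -
      let ?Q = "{e\<in>edges X. src X e = a \<and> rng X e = rng X (hd \<beta>)}"
      have "(\<psi>3 \<circ> Inl) ` ?Q \<subseteq> {e\<in>edges X3. src X3 e = src X3 (hd \<beta>3) \<and> rng X3 e = rng X3 (hd \<beta>3)}"
        using c3 b3 s3 by (auto simp: bij_betw_def addS_simps)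
      moreover have "inj_on (\<psi>3 \<circ> Inl) ?Q"
      proof (rule comp_inj_on)
        show "inj_on Inl ?Q" by (simp add: inj_on_def)
        show "inj_on \<psi>3 (Inl ` ?Q)" using b3 unfolding bij_betw_def
          by (rule inj_on_subset[OF conjunct1]) (auto simp: addS_def)
      qed
      ultimately show ?thesis using inf_image infX by blast
    qed
    have ax3: "a \<in> verts X3" "xk \<in> verts X3" using av xv v3 by auto
    obtain X4 :: "(nat,'t) graph" and \<psi>4 where X4: "iso_via (addS X3 a xk UNIV) X4 id \<psi>4" "wf_graph X4" "finite (verts X4)"
      using embed_id[OF addS_wf[OF X3(2) ax3] addS_finite[OF X3(3)] card_addS[OF t card_UNIV_t]] by blast
    have "graph_iso (addS X3 (src X3 (hd \<beta>3)) (rng X3 (last \<beta>3)) UNIV) X4"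
      using iso_via_graph_iso[OF X4(1)] s3 by simp
    then have e34: "equivclp move_step X3 X4"
      using Suc.IH[OF _ p3 X3(2,3) inf3 _ X4(2,3)] ln unfolding \<beta>3_def by simp
    have wA: "wf_graph (addS X a xk UNIV)" "wf_graph (addS X a y UNIV)" using addS_wf[OF wX av xv] addS_wf[OF wX av yv] by auto
    have wAA: "wf_graph (addS (addS X a xk UNIV) a y UNIV)" using addS_wf[OF wA(1)] av yv by auto
    have w1: "wf_graph (addS X1 a y UNIV)" using addS_wf[OF X1(2) ax1] .
    have g1: "graph_iso X2 (addS X1 a y UNIV)" using graph_iso_sym[OF w1 iso_via_graph_iso[OF X2(1)]] .
    have g2: "graph_iso (addS X1 a y UNIV) (addS (addS X a xk UNIV) a y UNIV)"
    proof -
      have "iso_via (addS (addS X a xk UNIV) a y UNIV) (addS X1 a y UNIV) id (map_sum \<psi>1 id)"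
        using addS_iso[OF X1(1), of a y UNIV] by simp
      then show ?thesis using graph_iso_sym[OF wAA iso_via_graph_iso] by blast
    qed
    have g3: "graph_iso (addS (addS X a xk UNIV) a y UNIV) (addS (addS X a y UNIV) a xk UNIV)"
      using iso_via_graph_iso[OF addS_swap] .
    have g4: "graph_iso (addS (addS X a y UNIV) a xk UNIV) (addS X3 a xk UNIV)"
    proof -
      have "iso_via (addS (addS X a y UNIV) a xk UNIV) (addS X3 a xk UNIV) id (map_sum \<psi>3 id)"
        using addS_iso[OF X3(1), of a xk UNIV] by simp
      then show ?thesis using iso_via_graph_iso by blast
    qed
    have g5: "graph_iso (addS X3 a xk UNIV) X4" using X4(1) iso_via_graph_iso by blast
    have g24: "graph_iso X2 X4" using graph_iso_trans[OF g1 graph_iso_trans[OF g2 graph_iso_trans[OF g3 graph_iso_trans[OF g4 g5]]]] .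
    have ne2: "edges X2 \<noteq> {}"
    proof -
      have "Inr 0 \<in> edges (addS X1 a y UNIV)" by (simp add: addS_simps)
      then show ?thesis using X2(1) unfolding iso_via_def bij_betw_def by auto
    qed
    have e24: "equivclp move_step X2 X4" using iso_equivclp[OF X2(2,3) X4(2,3) ne2 g24] .
    have "graph_iso (addS X a y UNIV) X'" using prems(5) hd a_def y_def by simp
    moreover have "graph_iso X3 (addS X a y UNIV)" using graph_iso_sym[OF wA(2) iso_via_graph_iso[OF X3(1)]] .
    ultimately have g3': "graph_iso X3 X'" using graph_iso_trans[of X3 "addS X a y UNIV" X'] by blast
    have ne3: "edges X3 \<noteq> {}" using p3 unfolding is_path_def by (cases \<beta>3) auto
    have e3': "equivclp move_step X3 X'" using iso_equivclp[OF X3(2,3) prems(6,7) ne3 g3'] .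
    show ?thesis using e01 e12 e24 e34 e3'
      by (meson equivclp_sym equivclp_trans)
  qed
qed

theorem theorem5p4:
  fixes G :: "('v, 'e) graph" and \<alpha> :: "'e list"
  assumes "wf_graph G"
    and "finite (verts G)"
    and "is_path G \<alpha>"
    and "infinite {e \<in> edges G. src G e = src G (hd \<alpha>) \<and> rng G e = rng G (hd \<alpha>)}"
  shows "move_equiv G (add_path_edges G \<alpha>)"
proof -
  let ?a = "src G (hd \<alpha>)" and ?x = "rng G (last \<alpha>)"
  have ne: "\<alpha> \<noteq> []" and sa: "set \<alpha> \<subseteq> edges G" using assms(3) unfolding is_path_def by auto
  have hin0: "hd \<alpha> \<in> edges G" "last \<alpha> \<in> edges G" using sa ne by auto
  have av: "?a \<in> verts G" "?x \<in> verts G" using assms(1) hin0 unfolding wf_graph_def by auto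
  obtain \<phi>0 :: "'v \<Rightarrow> nat" where \<phi>0: "inj_on \<phi>0 (verts G)" using finite_inj_nat assms(2) by blast
  define g :: "'e + nat \<Rightarrow> 'e + ('e + nat) + nat" where "g x = (case x of Inl e \<Rightarrow> Inl e | Inr m \<Rightarrow> Inr (Inr m))" for x
  define G' :: "(nat, 'e + ('e + nat) + nat) graph" where "G' = emb G \<phi>0 Inl"
  define E where "E = add_path_edges G \<alpha>"
  define E' :: "(nat, 'e + ('e + nat) + nat) graph" where "E' = emb E \<phi>0 g"
  have E: "E = addS G ?a ?x UNIV" unfolding E_def add_path_edges_addS ..
  have wE: "wf_graph E" using E addS_wf[OF assms(1) av] by simp
  have fE: "finite (verts E)" using E assms(2) by simp
  have iG: "iso_via G G' \<phi>0 Inl" unfolding G'_def by (rule emb_iso[OF \<phi>0]) (simp add: inj_on_def)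
  have iE: "iso_via E E' \<phi>0 g" unfolding E'_def
    by (rule emb_iso) (use \<phi>0 E in \<open>auto simp: inj_on_def g_def split: sum.splits\<close>)
  have wG': "wf_graph G'" "finite (verts G')" using iso_via_wf[OF iG assms(1)] iso_via_finite[OF iG assms(2)] by auto
  have wE': "wf_graph E'" "finite (verts E')" using iso_via_wf[OF iE wE] iso_via_finite[OF iE fE] by auto
  define \<beta> :: "('e + ('e + nat) + nat) list" where "\<beta> = map Inl \<alpha>"
  have p: "is_path G' \<beta>" unfolding \<beta>_def by (rule path_iso[OF iG assms(3)])
  have cG: "e \<in> edges G \<Longrightarrow> src G' (Inl e) = \<phi>0 (src G e) \<and> rng G' (Inl e) = \<phi>0 (rng G e)" for e
    using iG unfolding iso_via_def by simp
  have hdb: "hd \<beta> = Inl (hd \<alpha>)" "last \<beta> = Inl (last \<alpha>)" unfolding \<beta>_def using ne by (auto simp: hd_map last_map)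
  have hin: "hd \<alpha> \<in> edges G" "last \<alpha> \<in> edges G" using sa ne by auto
  have sb: "src G' (hd \<beta>) = \<phi>0 ?a" "rng G' (hd \<beta>) = \<phi>0 (rng G (hd \<alpha>))" "rng G' (last \<beta>) = \<phi>0 ?x"
    using hdb cG hin by auto
  have inf: "infinite {e\<in>edges G'. src G' e = src G' (hd \<beta>) \<and> rng G' e = rng G' (hd \<beta>)}"
  proof -
    let ?Q = "{e \<in> edges G. src G e = src G (hd \<alpha>) \<and> rng G e = rng G (hd \<alpha>)}"
    have "Inl ` ?Q \<subseteq> {e\<in>edges G'. src G' e = src G' (hd \<beta>) \<and> rng G' e = rng G' (hd \<beta>)}"
      using sb cG iG unfolding iso_via_def bij_betw_def by auto
    moreover have "inj_on Inl ?Q" by (simp add: inj_on_def)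
    ultimately show ?thesis using inf_image assms(4) by blast
  qed
  have t: "infinite (UNIV :: ('e + ('e + nat) + nat) set)"
  proof
    assume "finite (UNIV :: ('e + ('e + nat) + nat) set)"
    then have 1: "finite (range (\<lambda>m::nat. Inr (Inr m) :: 'e + ('e + nat) + nat))" by (rule finite_subset[OF subset_UNIV])
    have 2: "inj (\<lambda>m::nat. Inr (Inr m) :: 'e + ('e + nat) + nat)" by (simp add: inj_on_def)
    have "finite (UNIV::nat set)" using finite_imageD[OF 1 2] .
    then show False by simp
  qed
  have gi: "graph_iso (addS G' (src G' (hd \<beta>)) (rng G' (last \<beta>)) UNIV) E'"
  proof -
    have "iso_via (addS G ?a ?x UNIV) (addS G' (\<phi>0 ?a) (\<phi>0 ?x) UNIV) \<phi>0 (map_sum Inl id)"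
      using addS_iso[OF iG] .
    then have "graph_iso (addS G ?a ?x UNIV) (addS G' (\<phi>0 ?a) (\<phi>0 ?x) UNIV)" using iso_via_graph_iso by blast
    then have "graph_iso (addS G' (\<phi>0 ?a) (\<phi>0 ?x) UNIV) E"
      using graph_iso_sym[OF addS_wf[OF assms(1) av]] E by simp
    then have "graph_iso (addS G' (\<phi>0 ?a) (\<phi>0 ?x) UNIV) E'" using graph_iso_trans[OF _ iso_via_graph_iso[OF iE]] by blast
    then show ?thesis using sb by simp
  qed
  have "equivclp move_step G' E'"
    using path_induct[OF t refl p wG' inf gi wE'] .
  then show ?thesis unfolding move_equiv_def E_def[symmetric]
    using assms(1,2) wE fE iso_via_graph_iso[OF iG] iso_via_graph_iso[OF iE] by blast
qed


end
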